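(* Let $F$ be a field with $\operatorname{char}F\ne2$ and let $L/F$ be a Galois extension with $\operatorname{Gal}(L/F)\cong G_1$. Then there is a unique quadratic extension $F(\sqrt a)$ of $F$ such that $F\subseteq F(\sqrt a)\subseteq E\subseteq L$ for some subfield $E$ of $L$ with $E/F$ Galois and $\operatorname{Gal}(E/F)\cong C$. The element $-a$ is not rigid.
   Context: $C$ is the cyclic group of order 4. An element $c\in\dot F\setminus(F^2\cup-F^2)$ is rigid if the set of nonzero values of $x_1^2+cx_2^2$ equals $\dot F^2\cup c\dot F^2$, and nonrigid otherwise. Commutators $[\sigma,\tau]=\sigma^{-1}\tau^{-1}\sigma\tau$. $G_1$ is the group generated by $x,y$ with relations $x^4=y^2=1$, $[x,y]^2=[[x,y],x]^2=1$, and $[[x,y],x]$ commutes with $x$ and $y$. *)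

theory Defs
  imports "HOL-Algebra.Elementary_Groups" "HOL-Algebra.Generated_Groups"
          "HOL-Computational_Algebra.Polynomial"
begin

definition is_subfield :: "'l::field set \<Rightarrow> bool" where
  "is_subfield K \<longleftrightarrow> 0 \<in> K \<and> 1 \<in> K \<and>
     (\<forall>x\<in>K. \<forall>y\<in>K. x + y \<in> K \<and> x - y \<in> K \<and> x * y \<in> K) \<and>
     (\<forall>x\<in>K. x \<noteq> 0 \<longrightarrow> inverse x \<in> K)"

definition adjoin :: "'l::field set \<Rightarrow> 'l \<Rightarrow> 'l set" where
  "adjoin F r = \<Inter>{S. is_subfield S \<and> F \<subseteq> S \<and> r \<in> S}"

text \<open>Gal(K/F): field automorphisms of K fixing F pointwise (extended by the
  identity outside K so that they form a group under composition)\<close>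
definition gal_auts :: "'l::field set \<Rightarrow> 'l set \<Rightarrow> ('l \<Rightarrow> 'l) set" where
  "gal_auts F K = {\<sigma>. bij_betw \<sigma> K K
        \<and> (\<forall>x\<in>K. \<forall>y\<in>K. \<sigma> (x + y) = \<sigma> x + \<sigma> y \<and> \<sigma> (x * y) = \<sigma> x * \<sigma> y)
        \<and> \<sigma> 1 = 1
        \<and> (\<forall>x\<in>F. \<sigma> x = x)
        \<and> (\<forall>x. x \<notin> K \<longrightarrow> \<sigma> x = x)}"

definition gal_group :: "'l::field set \<Rightarrow> 'l set \<Rightarrow> ('l \<Rightarrow> 'l) monoid" where
  "gal_group F K = \<lparr> carrier = gal_auts F K, monoid.mult = (\<lambda>\<sigma> \<tau>. \<sigma> \<circ> \<tau>), one = id \<rparr>"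

definition algebraic_ext :: "'l::field set \<Rightarrow> 'l set \<Rightarrow> bool" where
  "algebraic_ext F K \<longleftrightarrow>
     (\<forall>x\<in>K. \<exists>p::'l poly. p \<noteq> 0 \<and> (\<forall>i. coeff p i \<in> F) \<and> poly p x = 0)"

definition galois_ext :: "'l::field set \<Rightarrow> 'l set \<Rightarrow> bool" where
  "galois_ext F K \<longleftrightarrow> is_subfield F \<and> is_subfield K \<and> F \<subseteq> K \<and> algebraic_ext F K \<and>
     {x\<in>K. \<forall>\<sigma>\<in>carrier (gal_group F K). \<sigma> x = x} = F"

definition rigid :: "'l::field set \<Rightarrow> 'l \<Rightarrow> bool" where
  "rigid F c \<longleftrightarrow> c \<in> F - {0} \<and> c \<notin> {t * t |t. t \<in> F} \<and> c \<notin> {- (t * t) |t. t \<in> F} \<and>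
     {x1 * x1 + c * x2 * x2 |x1 x2. x1 \<in> F \<and> x2 \<in> F} - {0}
       = {t * t |t. t \<in> F - {0}} \<union> {c * t * t |t. t \<in> F - {0}}"

abbreviation C4 :: "int monoid" where "C4 \<equiv> integer_mod_group 4"

text \<open>Free group on generators of type 'g: freely reduced words of letters
  (g, b), where b = True marks the inverse of g.\<close>
definition free_reduce :: "('g \<times> bool) list \<Rightarrow> ('g \<times> bool) list" where
  "free_reduce xs = foldr (\<lambda>x w. case w of [] \<Rightarrow> [x]
       | y # ys \<Rightarrow> (if fst x = fst y \<and> snd x \<noteq> snd y then ys else x # w)) xs []"

definition free_grp :: "(('g \<times> bool) list) monoid" where
  "free_grp = \<lparr> carrier = {w. free_reduce w = w},
      monoid.mult = (\<lambda>u v. free_reduce (u @ v)), one = [] \<rparr>"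

definition fg_comm :: "('g \<times> bool) list \<Rightarrow> ('g \<times> bool) list \<Rightarrow> ('g \<times> bool) list" where
  "fg_comm s t = inv\<^bsub>free_grp\<^esub> s \<otimes>\<^bsub>free_grp\<^esub> inv\<^bsub>free_grp\<^esub> t
       \<otimes>\<^bsub>free_grp\<^esub> s \<otimes>\<^bsub>free_grp\<^esub> t"

definition G1_relators :: "((bool \<times> bool) list) set" where
  "G1_relators = (let x = [(True, False)]; y = [(False, False)];
       c = fg_comm x y; d = fg_comm c x in
     { x [^]\<^bsub>free_grp\<^esub> (4::nat), y [^]\<^bsub>free_grp\<^esub> (2::nat),
       c [^]\<^bsub>free_grp\<^esub> (2::nat), d [^]\<^bsub>free_grp\<^esub> (2::nat),
       fg_comm d x, fg_comm d y })"

definition G1 :: "((bool \<times> bool) list set) monoid" where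
  "G1 = free_grp Mod
     generate free_grp (\<Union>g\<in>carrier free_grp.
        (\<lambda>r. g \<otimes>\<^bsub>free_grp\<^esub> r \<otimes>\<^bsub>free_grp\<^esub> inv\<^bsub>free_grp\<^esub> g) ` G1_relators)"

end

theory Submission
  imports Defs
begin

section \<open>Free group\<close>

definition fstep :: "('g \<times> bool) \<Rightarrow> ('g \<times> bool) list \<Rightarrow> ('g \<times> bool) list" where
  "fstep x w = (case w of [] \<Rightarrow> [x]
       | y # ys \<Rightarrow> (if fst x = fst y \<and> snd x \<noteq> snd y then ys else x # w))"

lemma free_reduce_foldr: "free_reduce xs = foldr fstep xs []"
  unfolding free_reduce_def fstep_def by (rule refl)

fun red :: "('g \<times> bool) list \<Rightarrow> bool" where
  "red [] = True"
| "red [x] = True"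
| "red (x # y # ys) = (\<not> (fst x = fst y \<and> snd x \<noteq> snd y) \<and> red (y # ys))"

lemma red_tl: "red (x # w) \<Longrightarrow> red w"
  by (cases w) auto

lemma red_fstep: "red w \<Longrightarrow> red (fstep x w)"
  by (cases w) (auto simp: fstep_def dest: red_tl)

lemma red_foldr: "red w \<Longrightarrow> red (foldr fstep z w)"
  by (induction z) (auto intro: red_fstep)

lemma red_free_reduce: "red (free_reduce w)"
  unfolding free_reduce_foldr by (rule red_foldr) simp

lemma fstep_red_cons: "red (x # w) \<Longrightarrow> fstep x w = x # w"
  by (cases w) (auto simp: fstep_def)

lemma free_reduce_red: "red w \<Longrightarrow> free_reduce w = w"
proof (induction w)
  case Nil then show ?case by (simp add: free_reduce_foldr)
next
  case (Cons x w)
  then have "free_reduce w = w" using red_tl by blast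
  then show ?case using Cons.prems fstep_red_cons by (simp add: free_reduce_foldr)
qed

lemma free_reduce_iff: "free_reduce w = w \<longleftrightarrow> red w"
  using free_reduce_red red_free_reduce by metis

definition flip :: "('g \<times> bool) \<Rightarrow> ('g \<times> bool)" where
  "flip x = (fst x, \<not> snd x)"

lemma flip_flip[simp]: "flip (flip x) = x" by (simp add: flip_def)

lemma fstep_cancel: "red w \<Longrightarrow> fstep x (fstep (flip x) w) = w"
proof (cases w)
  case Nil then show ?thesis by (simp add: fstep_def flip_def)
next
  case (Cons y ys)
  assume r: "red w"
  show ?thesis
  proof (cases "fst (flip x) = fst y \<and> snd (flip x) \<noteq> snd y")
    case True
    then have xy: "x = y" by (cases x, cases y) (auto simp: flip_def)
    have "fstep (flip x) w = ys" using True Cons by (simp add: fstep_def)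
    moreover have "fstep x ys = x # ys" using r Cons xy fstep_red_cons by simp
    ultimately show ?thesis using Cons xy by simp
  next
    case False
    then have "fstep (flip x) w = flip x # w" using Cons by (simp add: fstep_def)
    then show ?thesis by (simp add: fstep_def flip_def)
  qed
qed

lemma foldr_fstep: "red w \<Longrightarrow> foldr fstep (fstep x v) w = fstep x (foldr fstep v w)"
proof (cases v)
  case Nil then show ?thesis by (simp add: fstep_def)
next
  case (Cons y ys)
  assume r: "red w"
  show ?thesis
  proof (cases "fst x = fst y \<and> snd x \<noteq> snd y")
    case True
    then have "x = flip y" by (cases x, cases y) (auto simp: flip_def)
    then have "fstep x (fstep y (foldr fstep ys w)) = foldr fstep ys w"
      using fstep_cancel[of "foldr fstep ys w" "flip y"] red_foldr[OF r] by simp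
    moreover have "foldr fstep (fstep x v) w = foldr fstep ys w" using True Cons by (simp add: fstep_def)
    ultimately show ?thesis using Cons by simp
  next
    case False
    then have "fstep x v = x # v" using Cons by (simp add: fstep_def)
    then show ?thesis by simp
  qed
qed

lemma foldr_free_reduce: "red w \<Longrightarrow> foldr fstep (free_reduce z) w = foldr fstep z w"
proof (induction z)
  case Nil then show ?case by (simp add: free_reduce_foldr)
next
  case (Cons x z)
  have "foldr fstep (free_reduce (x # z)) w = foldr fstep (fstep x (free_reduce z)) w"
    by (simp add: free_reduce_foldr)
  also have "\<dots> = fstep x (foldr fstep (free_reduce z) w)" using foldr_fstep Cons by blast
  also have "\<dots> = foldr fstep (x # z) w" using Cons by simp
  finally show ?case .
qed

lemma free_reduce_append: "free_reduce (u @ v) = foldr fstep u (free_reduce v)"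
  by (simp add: free_reduce_foldr)

lemma free_reduce_assoc:
  "free_reduce (free_reduce (u @ v) @ w) = free_reduce (u @ free_reduce (v @ w))"
proof -
  have "free_reduce (free_reduce (u @ v) @ w) = foldr fstep (u @ v) (free_reduce w)"
    using free_reduce_append foldr_free_reduce red_free_reduce by metis
  moreover have "free_reduce (u @ free_reduce (v @ w)) = foldr fstep (u @ v) (free_reduce w)"
    by (simp add: free_reduce_append free_reduce_red[OF red_foldr[OF red_free_reduce]])
  ultimately show ?thesis by simp
qed

definition winv :: "('g \<times> bool) list \<Rightarrow> ('g \<times> bool) list" where
  "winv w = rev (map flip w)"

lemma foldr_winv: "red v \<Longrightarrow> foldr fstep (winv w) (foldr fstep w v) = v"
proof (induction w)
  case Nil then show ?case by (simp add: winv_def)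
next
  case (Cons x w)
  have "foldr fstep (winv (x # w)) (foldr fstep (x # w) v)
      = foldr fstep (winv w) (fstep (flip x) (fstep x (foldr fstep w v)))"
    by (simp add: winv_def)
  also have "\<dots> = foldr fstep (winv w) (foldr fstep w v)"
    using fstep_cancel[of "foldr fstep w v" "flip x"] red_foldr[OF Cons.prems] by simp
  also have "\<dots> = v" using Cons by simp
  finally show ?case .
qed

lemma winv_red: "red (winv w) \<Longrightarrow> True" by simp

lemma group_free_grp: "group (free_grp :: (('g \<times> bool) list) monoid)"
proof (rule groupI)
  show "\<And>x y. x \<in> carrier (free_grp::(('g \<times> bool) list) monoid) \<Longrightarrow> y \<in> carrier free_grp \<Longrightarrow>
      x \<otimes>\<^bsub>free_grp\<^esub> y \<in> carrier free_grp"
    by (simp add: free_grp_def free_reduce_iff red_free_reduce)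
  show "\<one>\<^bsub>(free_grp::(('g \<times> bool) list) monoid)\<^esub> \<in> carrier free_grp"
    by (simp add: free_grp_def free_reduce_foldr)
  show "\<And>x y z. x \<in> carrier (free_grp::(('g \<times> bool) list) monoid) \<Longrightarrow> y \<in> carrier free_grp \<Longrightarrow>
      z \<in> carrier free_grp \<Longrightarrow> x \<otimes>\<^bsub>free_grp\<^esub> y \<otimes>\<^bsub>free_grp\<^esub> z = x \<otimes>\<^bsub>free_grp\<^esub> (y \<otimes>\<^bsub>free_grp\<^esub> z)"
    by (simp add: free_grp_def free_reduce_assoc)
  show "\<And>x. x \<in> carrier (free_grp::(('g \<times> bool) list) monoid) \<Longrightarrow> \<one>\<^bsub>free_grp\<^esub> \<otimes>\<^bsub>free_grp\<^esub> x = x"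
    by (simp add: free_grp_def)
  show "\<exists>y\<in>carrier free_grp. y \<otimes>\<^bsub>free_grp\<^esub> x = \<one>\<^bsub>free_grp\<^esub>"
    if "x \<in> carrier (free_grp::(('g \<times> bool) list) monoid)" for x
  proof
    have rx: "red x" using that by (simp add: free_grp_def free_reduce_iff)
    have "free_reduce (free_reduce (winv x) @ x) = []"
      using foldr_winv[of "[]" x] free_reduce_red[OF rx] foldr_free_reduce[OF rx, of "winv x"]
      by (simp add: free_reduce_append free_reduce_foldr)
    then show "free_reduce (winv x) \<otimes>\<^bsub>free_grp\<^esub> x = \<one>\<^bsub>free_grp\<^esub>" by (simp add: free_grp_def)
    show "free_reduce (winv x) \<in> carrier free_grp"
      by (simp add: free_grp_def free_reduce_iff red_free_reduce)
  qed
qed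

abbreviation FG :: "(bool \<times> bool) list monoid" where "FG \<equiv> free_grp"

definition gcomm :: "('a, 'b) monoid_scheme \<Rightarrow> 'a \<Rightarrow> 'a \<Rightarrow> 'a" where
  "gcomm G s t = inv\<^bsub>G\<^esub> s \<otimes>\<^bsub>G\<^esub> inv\<^bsub>G\<^esub> t \<otimes>\<^bsub>G\<^esub> s \<otimes>\<^bsub>G\<^esub> t"

lemma fg_comm_gcomm: "fg_comm s t = gcomm free_grp s t"
  by (simp add: fg_comm_def gcomm_def)

definition rels :: "('a, 'b) monoid_scheme \<Rightarrow> 'a \<Rightarrow> 'a \<Rightarrow> bool" where
  "rels H a b \<longleftrightarrow> a \<in> carrier H \<and> b \<in> carrier H \<and>
     a [^]\<^bsub>H\<^esub> (4::nat) = \<one>\<^bsub>H\<^esub> \<and> b [^]\<^bsub>H\<^esub> (2::nat) = \<one>\<^bsub>H\<^esub> \<and>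
     (gcomm H a b) [^]\<^bsub>H\<^esub> (2::nat) = \<one>\<^bsub>H\<^esub> \<and>
     (gcomm H (gcomm H a b) a) [^]\<^bsub>H\<^esub> (2::nat) = \<one>\<^bsub>H\<^esub> \<and>
     gcomm H (gcomm H (gcomm H a b) a) a = \<one>\<^bsub>H\<^esub> \<and>
     gcomm H (gcomm H (gcomm H a b) a) b = \<one>\<^bsub>H\<^esub>"

lemma gcomm_closed: "group G \<Longrightarrow> a \<in> carrier G \<Longrightarrow> b \<in> carrier G \<Longrightarrow> gcomm G a b \<in> carrier G"
  by (simp add: gcomm_def group.inv_closed monoid.m_closed group.is_monoid)

lemma hom_gcomm:
  assumes "group G" "group H" "h \<in> hom G H" "a \<in> carrier G" "b \<in> carrier G"
  shows "h (gcomm G a b) = gcomm H (h a) (h b)"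
proof -
  interpret group_hom G H h using assms by (simp add: group_hom_def group_hom_axioms_def)
  show ?thesis using assms by (simp add: gcomm_def)
qed

definition xw :: "(bool \<times> bool) list" where "xw = [(True, False)]"
definition yw :: "(bool \<times> bool) list" where "yw = [(False, False)]"

lemma xw_carrier[simp]: "xw \<in> carrier FG"
  by (simp add: xw_def free_grp_def free_reduce_iff)
lemma yw_carrier[simp]: "yw \<in> carrier FG"
  by (simp add: yw_def free_grp_def free_reduce_iff)

lemma G1_relators_eq: "G1_relators = {xw [^]\<^bsub>FG\<^esub> (4::nat), yw [^]\<^bsub>FG\<^esub> (2::nat),
       (gcomm FG xw yw) [^]\<^bsub>FG\<^esub> (2::nat), (gcomm FG (gcomm FG xw yw) xw) [^]\<^bsub>FG\<^esub> (2::nat),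
       gcomm FG (gcomm FG (gcomm FG xw yw) xw) xw, gcomm FG (gcomm FG (gcomm FG xw yw) xw) yw}"
  by (simp add: G1_relators_def fg_comm_gcomm xw_def yw_def Let_def)

interpretation FGg: group FG by (rule group_free_grp)

lemma G1_relators_carrier: "G1_relators \<subseteq> carrier FG"
  unfolding G1_relators_eq by (simp add: gcomm_closed group_free_grp)

definition Conj :: "(bool \<times> bool) list set" where
  "Conj = (\<Union>g\<in>carrier FG. (\<lambda>r. g \<otimes>\<^bsub>FG\<^esub> r \<otimes>\<^bsub>FG\<^esub> inv\<^bsub>FG\<^esub> g) ` G1_relators)"

definition NN :: "(bool \<times> bool) list set" where "NN = generate FG Conj"

lemma G1_eq: "G1 = FG Mod NN"
  by (simp add: G1_def NN_def Conj_def)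

lemma Conj_carrier: "Conj \<subseteq> carrier FG"
  using G1_relators_carrier by (auto simp: Conj_def)

lemma NN_normal: "NN \<lhd> FG"
  unfolding NN_def
proof (rule FGg.normal_generateI[OF Conj_carrier])
  fix h g assume h: "h \<in> Conj" and g: "g \<in> carrier FG"
  then obtain g' r where g': "g' \<in> carrier FG" and r: "r \<in> G1_relators"
    and hh: "h = g' \<otimes>\<^bsub>FG\<^esub> r \<otimes>\<^bsub>FG\<^esub> inv\<^bsub>FG\<^esub> g'"
    by (auto simp: Conj_def)
  have rc: "r \<in> carrier FG" using r G1_relators_carrier by auto
  have "g \<otimes>\<^bsub>FG\<^esub> h \<otimes>\<^bsub>FG\<^esub> inv\<^bsub>FG\<^esub> g
     = (g \<otimes>\<^bsub>FG\<^esub> g') \<otimes>\<^bsub>FG\<^esub> r \<otimes>\<^bsub>FG\<^esub> inv\<^bsub>FG\<^esub> (g \<otimes>\<^bsub>FG\<^esub> g')"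
    using g g' rc by (simp add: hh FGg.m_assoc FGg.inv_mult_group)
  then show "g \<otimes>\<^bsub>FG\<^esub> h \<otimes>\<^bsub>FG\<^esub> inv\<^bsub>FG\<^esub> g \<in> Conj"
    using g g' r by (auto simp: Conj_def)
qed

interpretation NNn: normal NN FG by (rule NN_normal)

lemma group_G1: "group G1"
  unfolding G1_eq by (rule NNn.factorgroup_is_group)

lemma relators_in_NN: "G1_relators \<subseteq> NN"
proof
  fix r assume r: "r \<in> G1_relators"
  then have "\<one>\<^bsub>FG\<^esub> \<otimes>\<^bsub>FG\<^esub> r \<otimes>\<^bsub>FG\<^esub> inv\<^bsub>FG\<^esub> \<one>\<^bsub>FG\<^esub> \<in> Conj"
    unfolding Conj_def by blast
  then have "r \<in> Conj" using r G1_relators_carrier by auto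
  then show "r \<in> NN" unfolding NN_def by (rule generate.incl)
qed

section \<open>Universal property\<close>

definition lt :: "('a, 'b) monoid_scheme \<Rightarrow> 'a \<Rightarrow> 'a \<Rightarrow> bool \<times> bool \<Rightarrow> 'a" where
  "lt H a b l = (let z = (if fst l then a else b) in if snd l then inv\<^bsub>H\<^esub> z else z)"

fun ev :: "('a, 'b) monoid_scheme \<Rightarrow> 'a \<Rightarrow> 'a \<Rightarrow> (bool \<times> bool) list \<Rightarrow> 'a" where
  "ev H a b [] = \<one>\<^bsub>H\<^esub>"
| "ev H a b (l # w) = lt H a b l \<otimes>\<^bsub>H\<^esub> ev H a b w"

context
  fixes H :: "('a, 'b) monoid_scheme" and a b
  assumes H: "group H" and a: "a \<in> carrier H" and b: "b \<in> carrier H"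
begin

interpretation Hg: group H by (rule H)

lemma lt_carrier: "lt H a b l \<in> carrier H"
  using a b by (simp add: lt_def Let_def)

lemma ev_carrier: "ev H a b w \<in> carrier H"
  by (induction w) (auto simp: lt_carrier)

lemma lt_flip: "lt H a b (flip l) \<otimes>\<^bsub>H\<^esub> lt H a b l = \<one>\<^bsub>H\<^esub>"
  using a b by (cases l) (auto simp: lt_def flip_def Let_def)

lemma ev_fstep: "ev H a b (fstep l w) = lt H a b l \<otimes>\<^bsub>H\<^esub> ev H a b w"
proof (cases w)
  case Nil then show ?thesis by (simp add: fstep_def lt_carrier)
next
  case (Cons y ys)
  show ?thesis
  proof (cases "fst l = fst y \<and> snd l \<noteq> snd y")
    case True
    then have "l = flip y" by (cases l, cases y) (auto simp: flip_def)
    then have "lt H a b l \<otimes>\<^bsub>H\<^esub> (lt H a b y \<otimes>\<^bsub>H\<^esub> ev H a b ys) = ev H a b ys"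
      using lt_flip[of y] by (simp add: Hg.m_assoc[symmetric] lt_carrier ev_carrier)
    then show ?thesis using True Cons by (simp add: fstep_def)
  next
    case False
    then have "fstep l w = l # w" using Cons by (simp add: fstep_def)
    then show ?thesis by simp
  qed
qed

lemma ev_free_reduce: "ev H a b (free_reduce w) = ev H a b w"
  by (induction w) (simp_all add: free_reduce_foldr ev_fstep)

lemma ev_append: "ev H a b (u @ v) = ev H a b u \<otimes>\<^bsub>H\<^esub> ev H a b v"
  by (induction u) (simp_all add: ev_carrier lt_carrier Hg.m_assoc)

lemma ev_hom: "ev H a b \<in> hom FG H"
  by (rule homI) (simp_all add: ev_carrier free_grp_def ev_free_reduce ev_append)

end

lemma ev_xw: "group H \<Longrightarrow> a \<in> carrier H \<Longrightarrow> ev H a b xw = a"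
  by (simp add: xw_def lt_def monoid.r_one[of H] group.is_monoid)
lemma ev_yw: "group H \<Longrightarrow> b \<in> carrier H \<Longrightarrow> ev H a b yw = b"
  by (simp add: yw_def lt_def monoid.r_one[of H] group.is_monoid)

lemma rels_hom:
  assumes "group G" "group H" "h \<in> hom G H" "rels G a b"
  shows "rels H (h a) (h b)"
proof -
  interpret gh: group_hom G H h using assms by (simp add: group_hom_def group_hom_axioms_def)
  have a: "a \<in> carrier G" and b: "b \<in> carrier G" using assms(4) by (auto simp: rels_def)
  have c: "gcomm G a b \<in> carrier G" using a b by (simp add: gcomm_closed assms)
  have d: "gcomm G (gcomm G a b) a \<in> carrier G" using a c by (simp add: gcomm_closed assms)
  note hc = hom_gcomm[OF assms(1,2,3)]
  have E: "\<And>t. t = \<one>\<^bsub>G\<^esub> \<Longrightarrow> h t = \<one>\<^bsub>H\<^esub>" by simp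
  note R = assms(4)[unfolded rels_def]
  have "h (a [^]\<^bsub>G\<^esub> (4::nat)) = \<one>\<^bsub>H\<^esub>" using R by simp
  then have 1: "h a [^]\<^bsub>H\<^esub> (4::nat) = \<one>\<^bsub>H\<^esub>" using a by (simp add: gh.hom_nat_pow)
  have "h (b [^]\<^bsub>G\<^esub> (2::nat)) = \<one>\<^bsub>H\<^esub>" using R by simp
  then have 2: "h b [^]\<^bsub>H\<^esub> (2::nat) = \<one>\<^bsub>H\<^esub>" using b by (simp add: gh.hom_nat_pow)
  have "h (gcomm G a b [^]\<^bsub>G\<^esub> (2::nat)) = \<one>\<^bsub>H\<^esub>" using R by simp
  then have 3: "gcomm H (h a) (h b) [^]\<^bsub>H\<^esub> (2::nat) = \<one>\<^bsub>H\<^esub>"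
    using a b c by (simp add: gh.hom_nat_pow hc)
  have "h (gcomm G (gcomm G a b) a [^]\<^bsub>G\<^esub> (2::nat)) = \<one>\<^bsub>H\<^esub>" using R by simp
  then have 4: "gcomm H (gcomm H (h a) (h b)) (h a) [^]\<^bsub>H\<^esub> (2::nat) = \<one>\<^bsub>H\<^esub>"
    using a b c d by (simp add: gh.hom_nat_pow hc)
  have "h (gcomm G (gcomm G (gcomm G a b) a) a) = \<one>\<^bsub>H\<^esub>" using R by simp
  then have 5: "gcomm H (gcomm H (gcomm H (h a) (h b)) (h a)) (h a) = \<one>\<^bsub>H\<^esub>"
    using a b c d by (simp add: hc)
  have "h (gcomm G (gcomm G (gcomm G a b) a) b) = \<one>\<^bsub>H\<^esub>" using R by simp
  then have 6: "gcomm H (gcomm H (gcomm H (h a) (h b)) (h a)) (h b) = \<one>\<^bsub>H\<^esub>"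
    using a b c d by (simp add: hc)
  show ?thesis unfolding rels_def using 1 2 3 4 5 6 a b by simp
qed

lemma ev_relators:
  assumes H: "group H" and r: "rels H a b" and rr: "r \<in> G1_relators"
  shows "ev H a b r = \<one>\<^bsub>H\<^esub>"
proof -
  have a: "a \<in> carrier H" and b: "b \<in> carrier H" using r by (auto simp: rels_def)
  have hom: "ev H a b \<in> hom FG H" using ev_hom[OF H a b] .
  interpret gh: group_hom FG H "ev H a b" using hom H group_free_grp
    by (simp add: group_hom_def group_hom_axioms_def)
  have c: "gcomm FG xw yw \<in> carrier FG" by (simp add: gcomm_closed group_free_grp)
  have d: "gcomm FG (gcomm FG xw yw) xw \<in> carrier FG" using c by (simp add: gcomm_closed group_free_grp)
  note hc = hom_gcomm[OF group_free_grp H hom]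
  show ?thesis using rr r c d unfolding G1_relators_eq rels_def
    by (auto simp: hc ev_xw[OF H a] ev_yw[OF H b] gh.hom_nat_pow)
qed

definition Phi :: "('a, 'b) monoid_scheme \<Rightarrow> 'a \<Rightarrow> 'a \<Rightarrow> (bool \<times> bool) list set \<Rightarrow> 'a" where
  "Phi H a b C = ev H a b (SOME w. w \<in> C)"

lemma NN_kernel:
  assumes H: "group H" and r: "rels H a b"
  shows "NN \<subseteq> kernel FG H (ev H a b)"
proof -
  have a: "a \<in> carrier H" and b: "b \<in> carrier H" using r by (auto simp: rels_def)
  have hom: "ev H a b \<in> hom FG H" using ev_hom[OF H a b] .
  interpret gh: group_hom FG H "ev H a b" using hom H group_free_grp
    by (simp add: group_hom_def group_hom_axioms_def)
  have "Conj \<subseteq> kernel FG H (ev H a b)"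
  proof
    fix h assume "h \<in> Conj"
    then obtain g r where g: "g \<in> carrier FG" and rr: "r \<in> G1_relators"
      and hh: "h = g \<otimes>\<^bsub>FG\<^esub> r \<otimes>\<^bsub>FG\<^esub> inv\<^bsub>FG\<^esub> g" by (auto simp: Conj_def)
    have rc: "r \<in> carrier FG" using rr G1_relators_carrier by auto
    have "ev H a b h = \<one>\<^bsub>H\<^esub>"
      using g rc ev_relators[OF H r rr] by (simp add: hh gh.H.r_inv)
    then show "h \<in> kernel FG H (ev H a b)" using hh g rc by (simp add: kernel_def)
  qed
  then show ?thesis unfolding NN_def
    by (rule FGg.generate_subgroup_incl) (rule gh.subgroup_kernel)
qed

lemma Phi_rcos:
  assumes H: "group H" and r: "rels H a b" and w: "w \<in> carrier FG"
  shows "Phi H a b (NN #>\<^bsub>FG\<^esub> w) = ev H a b w"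
proof -
  have a: "a \<in> carrier H" and b: "b \<in> carrier H" using r by (auto simp: rels_def)
  have hom: "ev H a b \<in> hom FG H" using ev_hom[OF H a b] .
  interpret gh: group_hom FG H "ev H a b" using hom H group_free_grp
    by (simp add: group_hom_def group_hom_axioms_def)
  have ex: "\<exists>w'. w' \<in> NN #>\<^bsub>FG\<^esub> w"
    using w NNn.one_closed by (auto simp: r_coset_def intro!: exI[of _ "\<one>\<^bsub>FG\<^esub> \<otimes>\<^bsub>FG\<^esub> w"])
  then have "(SOME w'. w' \<in> NN #>\<^bsub>FG\<^esub> w) \<in> NN #>\<^bsub>FG\<^esub> w" by (rule someI_ex)
  then obtain n where n: "n \<in> NN" and eq: "(SOME w'. w' \<in> NN #>\<^bsub>FG\<^esub> w) = n \<otimes>\<^bsub>FG\<^esub> w"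
    by (auto simp: r_coset_def)
  have nc: "n \<in> carrier FG" using n NNn.subset by auto
  have "ev H a b n = \<one>\<^bsub>H\<^esub>" using NN_kernel[OF H r] n by (auto simp: kernel_def)
  then show ?thesis using nc w by (simp add: Phi_def eq)
qed

lemma Phi_hom:
  assumes H: "group H" and r: "rels H a b"
  shows "Phi H a b \<in> hom G1 H"
proof (rule homI)
  have a: "a \<in> carrier H" and b: "b \<in> carrier H" using r by (auto simp: rels_def)
  have hom: "ev H a b \<in> hom FG H" using ev_hom[OF H a b] .
  interpret gh: group_hom FG H "ev H a b" using hom H group_free_grp
    by (simp add: group_hom_def group_hom_axioms_def)
  show "Phi H a b x \<in> carrier H" if "x \<in> carrier G1" for x
  proof -
    have "x \<in> rcosets\<^bsub>FG\<^esub> NN" using that by (simp add: G1_eq FactGroup_def)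
    then obtain w where w: "w \<in> carrier FG" and x: "x = NN #>\<^bsub>FG\<^esub> w"
      by (auto simp: RCOSETS_def)
    show ?thesis using Phi_rcos[OF H r w] w x by simp
  qed
  show "Phi H a b (x \<otimes>\<^bsub>G1\<^esub> y) = Phi H a b x \<otimes>\<^bsub>H\<^esub> Phi H a b y"
    if "x \<in> carrier G1" "y \<in> carrier G1" for x y
  proof -
    have "x \<in> rcosets\<^bsub>FG\<^esub> NN" "y \<in> rcosets\<^bsub>FG\<^esub> NN"
      using that by (simp_all add: G1_eq FactGroup_def)
    then obtain w v where w: "w \<in> carrier FG" and x: "x = NN #>\<^bsub>FG\<^esub> w"
      and v: "v \<in> carrier FG" and y: "y = NN #>\<^bsub>FG\<^esub> v"
      by (auto simp: RCOSETS_def)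
    have "x \<otimes>\<^bsub>G1\<^esub> y = NN #>\<^bsub>FG\<^esub> (w \<otimes>\<^bsub>FG\<^esub> v)"
      using w v by (simp add: G1_eq FactGroup_def x y NNn.rcos_sum)
    then show ?thesis using Phi_rcos[OF H r] w v x y by simp
  qed
qed

definition xc :: "(bool \<times> bool) list set" where "xc = NN #>\<^bsub>FG\<^esub> xw"
definition yc :: "(bool \<times> bool) list set" where "yc = NN #>\<^bsub>FG\<^esub> yw"

lemma Phi_xc: "group H \<Longrightarrow> rels H a b \<Longrightarrow> Phi H a b xc = a"
  using Phi_rcos[of H a b xw] ev_xw[of H a b] by (simp add: xc_def rels_def)
lemma Phi_yc: "group H \<Longrightarrow> rels H a b \<Longrightarrow> Phi H a b yc = b"
  using Phi_rcos[of H a b yw] ev_yw[of H b a] by (simp add: yc_def rels_def)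

lemma qhom: "(\<lambda>w. NN #>\<^bsub>FG\<^esub> w) \<in> hom FG G1"
  unfolding G1_eq by (rule NNn.r_coset_hom_Mod)

lemma q_NN: "r \<in> NN \<Longrightarrow> NN #>\<^bsub>FG\<^esub> r = \<one>\<^bsub>G1\<^esub>"
  by (simp add: G1_eq FactGroup_def NNn.rcos_const group_free_grp)

lemma rels_G1: "rels G1 xc yc"
proof -
  interpret gh: group_hom FG G1 "\<lambda>w. NN #>\<^bsub>FG\<^esub> w" using qhom group_G1 group_free_grp
    by (simp add: group_hom_def group_hom_axioms_def)
  have c: "gcomm FG xw yw \<in> carrier FG" by (simp add: gcomm_closed group_free_grp)
  have d: "gcomm FG (gcomm FG xw yw) xw \<in> carrier FG" using c by (simp add: gcomm_closed group_free_grp)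
  note hc = hom_gcomm[OF group_free_grp group_G1 qhom]
  have R: "\<And>r. r \<in> G1_relators \<Longrightarrow> NN #>\<^bsub>FG\<^esub> r = \<one>\<^bsub>G1\<^esub>"
    using relators_in_NN q_NN by blast
  show ?thesis
    unfolding rels_def xc_def yc_def
    using R[unfolded G1_relators_eq] c d
    by (simp add: hc[symmetric] gh.hom_nat_pow[symmetric] del: gh.hom_nat_pow)
qed

lemma G1_generated: "carrier G1 \<subseteq> generate G1 {xc, yc}"
proof -
  interpret G1g: group G1 by (rule group_G1)
  interpret gh: group_hom FG G1 "\<lambda>w. NN #>\<^bsub>FG\<^esub> w" using qhom group_G1 group_free_grp
    by (simp add: group_hom_def group_hom_axioms_def)
  have letter: "NN #>\<^bsub>FG\<^esub> [l] \<in> generate G1 {xc, yc}" for l :: "bool \<times> bool"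
  proof -
    have i1: "inv\<^bsub>FG\<^esub> xw = [(True, True)]"
      by (rule FGg.inv_equality) (simp_all add: xw_def free_grp_def free_reduce_iff free_reduce_foldr fstep_def)
    have i2: "inv\<^bsub>FG\<^esub> yw = [(False, True)]"
      by (rule FGg.inv_equality) (simp_all add: yw_def free_grp_def free_reduce_iff free_reduce_foldr fstep_def)
    obtain g s where l: "l = (g, s)" by (cases l)
    show ?thesis
    proof (cases g; cases s)
      assume "g" "s"
      then have "NN #>\<^bsub>FG\<^esub> [l] = NN #>\<^bsub>FG\<^esub> (inv\<^bsub>FG\<^esub> xw)" using i1 by (simp add: l)
      also have "\<dots> = inv\<^bsub>G1\<^esub> xc" by (simp add: xc_def gh.hom_inv)
      finally have "NN #>\<^bsub>FG\<^esub> [l] = inv\<^bsub>G1\<^esub> xc" .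
      then show ?thesis by (simp add: generate.inv)
    next
      assume "g" "\<not> s"
      then have "NN #>\<^bsub>FG\<^esub> [l] = xc" by (simp add: l xc_def xw_def)
      then show ?thesis by (simp add: generate.incl)
    next
      assume "\<not> g" "s"
      then have "NN #>\<^bsub>FG\<^esub> [l] = NN #>\<^bsub>FG\<^esub> (inv\<^bsub>FG\<^esub> yw)" using i2 by (simp add: l)
      also have "\<dots> = inv\<^bsub>G1\<^esub> yc" by (simp add: yc_def gh.hom_inv)
      finally have "NN #>\<^bsub>FG\<^esub> [l] = inv\<^bsub>G1\<^esub> yc" .
      then show ?thesis by (simp add: generate.inv)
    next
      assume "\<not> g" "\<not> s"
      then have "NN #>\<^bsub>FG\<^esub> [l] = yc" by (simp add: l yc_def yw_def)
      then show ?thesis by (simp add: generate.incl)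
    qed
  qed
  have "red w \<Longrightarrow> NN #>\<^bsub>FG\<^esub> w \<in> generate G1 {xc, yc}" for w
  proof (induction w)
    case Nil
    have "NN #>\<^bsub>FG\<^esub> [] = \<one>\<^bsub>G1\<^esub>" using q_NN[of "[]"] NNn.one_closed by (simp add: free_grp_def)
    then show ?case by (simp add: generate.one)
  next
    case (Cons l w)
    have rw: "red w" using Cons.prems red_tl by blast
    have lw: "[l] \<otimes>\<^bsub>FG\<^esub> w = l # w"
      using fstep_red_cons[OF Cons.prems] free_reduce_red[OF rw]
      by (simp add: free_grp_def free_reduce_append)
    have c1: "[l] \<in> carrier FG" by (simp add: free_grp_def free_reduce_iff)
    have c2: "w \<in> carrier FG" using rw by (simp add: free_grp_def free_reduce_iff)
    have "NN #>\<^bsub>FG\<^esub> (l # w) = (NN #>\<^bsub>FG\<^esub> [l]) \<otimes>\<^bsub>G1\<^esub> (NN #>\<^bsub>FG\<^esub> w)"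
      using gh.hom_mult[OF c1 c2] lw by simp
    then show ?case using letter Cons.IH[OF rw] by (simp add: generate.eng)
  qed
  then show ?thesis
    by (auto simp: G1_eq FactGroup_def RCOSETS_def free_grp_def free_reduce_iff)
qed

definition qmul :: "int \<times> bool \<times> int \<Rightarrow> int \<times> bool \<times> int \<Rightarrow> int \<times> bool \<times> int" where
  "qmul p q = ((fst p + (if fst (snd p) then - fst q else fst q)) mod 4,
               fst (snd p) \<noteq> fst (snd q), (snd (snd p) + snd (snd q)) mod 4)"

definition Q :: "(int \<times> bool \<times> int) monoid" where
  "Q = \<lparr>carrier = {p. 0 \<le> fst p \<and> fst p < 4 \<and> 0 \<le> snd (snd p) \<and> snd (snd p) < 4},
        monoid.mult = qmul, one = (0, False, 0)\<rparr>"

lemma Q_carrier: "(k, e, m) \<in> carrier Q \<longleftrightarrow> 0 \<le> k \<and> k < 4 \<and> 0 \<le> m \<and> m < 4"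
  by (simp add: Q_def)

lemma Q_mult: "(k1, e1, m1) \<otimes>\<^bsub>Q\<^esub> (k2, e2, m2) = ((k1 + (if e1 then - k2 else k2)) mod 4, e1 \<noteq> e2, (m1 + m2) mod 4)"
  by (simp add: Q_def qmul_def)

lemma Q_one: "\<one>\<^bsub>Q\<^esub> = (0, False, 0)" by (simp add: Q_def)

lemma group_Q: "group Q"
proof (rule groupI)
  show "x \<otimes>\<^bsub>Q\<^esub> y \<in> carrier Q" if "x \<in> carrier Q" "y \<in> carrier Q" for x y
    using that by (simp add: Q_def qmul_def)
  show "\<one>\<^bsub>Q\<^esub> \<in> carrier Q" by (simp add: Q_def)
  show "x \<otimes>\<^bsub>Q\<^esub> y \<otimes>\<^bsub>Q\<^esub> z = x \<otimes>\<^bsub>Q\<^esub> (y \<otimes>\<^bsub>Q\<^esub> z)"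
    if "x \<in> carrier Q" "y \<in> carrier Q" "z \<in> carrier Q" for x y z
  proof -
    obtain k1 e1 m1 k2 e2 m2 k3 e3 m3 where xyz: "x = (k1, e1, m1)" "y = (k2, e2, m2)" "z = (k3, e3, m3)"
      by (cases x, cases y, cases z) auto
    show ?thesis unfolding xyz Q_mult
      by (cases e1; cases e2; simp add: mod_add_left_eq mod_add_right_eq mod_diff_right_eq mod_diff_left_eq algebra_simps)
  qed
  show "\<one>\<^bsub>Q\<^esub> \<otimes>\<^bsub>Q\<^esub> x = x" if "x \<in> carrier Q" for x
    using that by (cases x) (simp add: Q_def qmul_def)
  show "\<exists>y\<in>carrier Q. y \<otimes>\<^bsub>Q\<^esub> x = \<one>\<^bsub>Q\<^esub>" if "x \<in> carrier Q" for x
  proof -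
    obtain k e m where x: "x = (k, e, m)" by (cases x) auto
    show ?thesis
      by (rule bexI[of _ "(if e then k else (- k) mod 4, e, (- m) mod 4)"])
         (use that in \<open>auto simp: x Q_def qmul_def mod_add_left_eq\<close>)
  qed
qed

interpretation Qg: group Q by (rule group_Q)

lemma Q_inv: "(k, e, m) \<in> carrier Q \<Longrightarrow>
   inv\<^bsub>Q\<^esub> (k, e, m) = (if e then k else (- k) mod 4, e, (- m) mod 4)"
  by (rule Qg.inv_equality) (auto simp: Q_def qmul_def mod_add_left_eq)

definition hx :: "int \<times> bool \<times> int" where "hx = (0, True, 1)"
definition hy :: "int \<times> bool \<times> int" where "hy = (1, True, 0)"

lemma rels_Q: "rels Q hx hy"
  unfolding rels_def gcomm_def hx_def hy_def
  by (simp add: Q_carrier Q_mult Q_inv Q_one numeral_eq_Suc)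

lemma gcomm_one_comm:
  fixes G (structure)
  assumes "group G" "u \<in> carrier G" "v \<in> carrier G" "gcomm G u v = \<one>\<^bsub>G\<^esub>"
  shows "u \<otimes>\<^bsub>G\<^esub> v = v \<otimes>\<^bsub>G\<^esub> u"
proof -
  interpret group G by fact
  have "inv (v \<otimes> u) \<otimes> (u \<otimes> v) = \<one>"
    using assms(2-4) by (simp add: gcomm_def inv_mult_group m_assoc)
  then show ?thesis using assms(2,3)
    by (metis inv_closed inv_inv m_closed inv_comm inv_equality)
qed

lemma sq_one_inv:
  fixes G (structure)
  assumes "group G" "u \<in> carrier G" "u [^]\<^bsub>G\<^esub> (2::nat) = \<one>\<^bsub>G\<^esub>"
  shows "inv\<^bsub>G\<^esub> u = u" "u \<otimes>\<^bsub>G\<^esub> u = \<one>\<^bsub>G\<^esub>"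
proof -
  interpret group G by fact
  show 1: "u \<otimes> u = \<one>" using assms by (simp add: numeral_eq_Suc)
  show "inv u = u" using 1 assms(2) by (simp add: inv_equality)
qed

context
  fixes G (structure) and a b
  assumes G: "group G" and R: "rels G a b"
begin

interpretation g: group G by (rule G)

abbreviation "cc \<equiv> gcomm G a b"
abbreviation "dd \<equiv> gcomm G cc a"

lemma ab_carrier: "a \<in> carrier G" "b \<in> carrier G" "cc \<in> carrier G" "dd \<in> carrier G"
  using R by (auto simp: rels_def gcomm_closed G)

lemma rel_facts:
  shows "a \<otimes>\<^bsub>G\<^esub> (a \<otimes>\<^bsub>G\<^esub> (a \<otimes>\<^bsub>G\<^esub> a)) = \<one>\<^bsub>G\<^esub>"
    and "b \<otimes>\<^bsub>G\<^esub> b = \<one>\<^bsub>G\<^esub>" "cc \<otimes>\<^bsub>G\<^esub> cc = \<one>\<^bsub>G\<^esub>" "dd \<otimes>\<^bsub>G\<^esub> dd = \<one>\<^bsub>G\<^esub>"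
    and "inv\<^bsub>G\<^esub> b = b" "inv\<^bsub>G\<^esub> cc = cc" "inv\<^bsub>G\<^esub> dd = dd"
    and "dd \<otimes>\<^bsub>G\<^esub> a = a \<otimes>\<^bsub>G\<^esub> dd" "dd \<otimes>\<^bsub>G\<^esub> b = b \<otimes>\<^bsub>G\<^esub> dd"
proof -
  note c = ab_carrier
  note RR = R[unfolded rels_def]
  show "a \<otimes>\<^bsub>G\<^esub> (a \<otimes>\<^bsub>G\<^esub> (a \<otimes>\<^bsub>G\<^esub> a)) = \<one>\<^bsub>G\<^esub>"
    using RR c by (simp add: numeral_eq_Suc g.m_assoc)
  show "b \<otimes>\<^bsub>G\<^esub> b = \<one>\<^bsub>G\<^esub>" "inv\<^bsub>G\<^esub> b = b" using sq_one_inv[OF G] c RR by auto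
  show "cc \<otimes>\<^bsub>G\<^esub> cc = \<one>\<^bsub>G\<^esub>" "inv\<^bsub>G\<^esub> cc = cc" using sq_one_inv[OF G] c RR by auto
  show "dd \<otimes>\<^bsub>G\<^esub> dd = \<one>\<^bsub>G\<^esub>" "inv\<^bsub>G\<^esub> dd = dd" using sq_one_inv[OF G] c RR by auto
  show "dd \<otimes>\<^bsub>G\<^esub> a = a \<otimes>\<^bsub>G\<^esub> dd" "dd \<otimes>\<^bsub>G\<^esub> b = b \<otimes>\<^bsub>G\<^esub> dd"
    using gcomm_one_comm[OF G] c RR by auto
qed

lemma ba: "b \<otimes>\<^bsub>G\<^esub> a = a \<otimes>\<^bsub>G\<^esub> (b \<otimes>\<^bsub>G\<^esub> cc)"
proof -
  note c = ab_carrier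
  have "cc = inv cc" using rel_facts(6) by simp
  also have "\<dots> = b \<otimes> inv a \<otimes> b \<otimes> a"
    using c by (simp add: gcomm_def g.inv_mult_group rel_facts(5) g.m_assoc)
  finally have ccb: "cc = b \<otimes> inv a \<otimes> b \<otimes> a" .
  have "a \<otimes>\<^bsub>G\<^esub> (b \<otimes>\<^bsub>G\<^esub> cc) = a \<otimes>\<^bsub>G\<^esub> (b \<otimes>\<^bsub>G\<^esub> (b \<otimes>\<^bsub>G\<^esub> inv\<^bsub>G\<^esub> a \<otimes>\<^bsub>G\<^esub> b \<otimes>\<^bsub>G\<^esub> a))"
    using ccb by simp
  also have "\<dots> = b \<otimes>\<^bsub>G\<^esub> a"
    using c rel_facts(2) by (simp add: g.m_assoc[symmetric] g.r_inv)
  finally show ?thesis by simp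
qed

lemma ca: "cc \<otimes> a = a \<otimes> (cc \<otimes> dd)"
proof -
  note c = ab_carrier
  have "a \<otimes> (cc \<otimes> dd) = a \<otimes> (cc \<otimes> (inv cc \<otimes> inv a \<otimes> cc \<otimes> a))"
    by (simp add: gcomm_def)
  also have "\<dots> = cc \<otimes> a"
    using c by (simp add: g.m_assoc[symmetric] g.r_inv)
  finally show ?thesis by simp
qed

lemma cb: "cc \<otimes> b = b \<otimes> cc"
proof -
  note c = ab_carrier
  have "cc = inv cc" using rel_facts(6) by simp
  also have "\<dots> = b \<otimes> inv a \<otimes> b \<otimes> a"
    using c by (simp add: gcomm_def g.inv_mult_group rel_facts(5) g.m_assoc)
  finally have ccb: "cc = b \<otimes> inv a \<otimes> b \<otimes> a" .
  have cca: "cc = inv a \<otimes> b \<otimes> a \<otimes> b"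
    by (simp add: gcomm_def rel_facts(5))
  have "cc \<otimes> b = inv a \<otimes> b \<otimes> a"
    using c rel_facts(2) by (simp add: cca g.m_assoc)
  moreover have "b \<otimes> cc = inv a \<otimes> b \<otimes> a"
    using c rel_facts(2) by (subst ccb) (simp add: g.m_assoc[symmetric])
  ultimately show ?thesis by simp
qed

definition nf :: "nat \<Rightarrow> nat \<Rightarrow> nat \<Rightarrow> nat \<Rightarrow> 'a" where
  "nf i j k l = a [^] i \<otimes> (b [^] j \<otimes> (cc [^] k \<otimes> dd [^] l))"

lemma pw: "x \<in> carrier G \<Longrightarrow> x [^] (0::nat) = \<one>" "x \<in> carrier G \<Longrightarrow> x [^] (1::nat) = x"
  "x \<in> carrier G \<Longrightarrow> x [^] (2::nat) = x \<otimes> x"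
  "x \<in> carrier G \<Longrightarrow> x [^] (3::nat) = x \<otimes> (x \<otimes> x)"
  by (simp_all add: numeral_eq_Suc g.m_assoc)

lemma two_cases: "j < (2::nat) \<Longrightarrow> j = 0 \<or> j = 1" by auto

lemma L_da: "(l::nat) < 2 \<Longrightarrow> dd [^] l \<otimes> a = a \<otimes> dd [^] l"
  using ab_carrier rel_facts(8) by (auto dest!: two_cases)
lemma L_ca: "(k::nat) < 2 \<Longrightarrow> cc [^] k \<otimes> a = a \<otimes> (cc [^] k \<otimes> dd [^] k)"
  using ab_carrier ca by (auto dest!: two_cases)
lemma L_ba: "(j::nat) < 2 \<Longrightarrow> b [^] j \<otimes> a = a \<otimes> (b [^] j \<otimes> cc [^] j)"
  using ab_carrier ba by (auto dest!: two_cases)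
lemma L_db: "(l::nat) < 2 \<Longrightarrow> dd [^] l \<otimes> b = b \<otimes> dd [^] l"
  using ab_carrier rel_facts(9) by (auto dest!: two_cases)
lemma L_cb: "(k::nat) < 2 \<Longrightarrow> cc [^] k \<otimes> b = b \<otimes> cc [^] k"
  using ab_carrier cb by (auto dest!: two_cases)
lemma L_cc: "(j::nat) < 2 \<Longrightarrow> k < 2 \<Longrightarrow> cc [^] j \<otimes> cc [^] k = cc [^] ((j + k) mod 2)"
  using ab_carrier rel_facts(3) by (auto dest!: two_cases)
lemma L_dd: "(j::nat) < 2 \<Longrightarrow> k < 2 \<Longrightarrow> dd [^] j \<otimes> dd [^] k = dd [^] ((j + k) mod 2)"
  using ab_carrier rel_facts(4) by (auto dest!: two_cases)
lemma L_bb: "(j::nat) < 2 \<Longrightarrow> b [^] j \<otimes> b = b [^] ((j + 1) mod 2)"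
  using ab_carrier rel_facts(2) by (auto dest!: two_cases)
lemma L_aa: "(i::nat) < 4 \<Longrightarrow> a [^] i \<otimes> a = a [^] ((i + 1) mod 4)"
proof -
  assume i: "i < 4"
  show ?thesis
  proof (cases "i = 3")
    case True
    then show ?thesis using ab_carrier rel_facts(1) by (simp add: numeral_eq_Suc g.m_assoc)
  next
    case False
    then have "(i + 1) mod 4 = Suc i" using i by simp
    then show ?thesis by simp
  qed
qed

lemma nf_a: "i < 4 \<Longrightarrow> j < 2 \<Longrightarrow> k < 2 \<Longrightarrow> l < 2 \<Longrightarrow>
  nf i j k l \<otimes> a = nf ((i + 1) mod 4) j ((j + k) mod 2) ((k + l) mod 2)"
proof -
  assume h: "i < 4" "j < 2" "k < 2" "l < 2"
  note c = ab_carrier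
  have P: "\<And>x n. x \<in> carrier G \<Longrightarrow> x [^] (n::nat) \<in> carrier G" by simp
  have "nf i j k l \<otimes> a = a [^] i \<otimes> (b [^] j \<otimes> (cc [^] k \<otimes> (dd [^] l \<otimes> a)))"
    using c by (simp add: nf_def g.m_assoc)
  also have "\<dots> = a [^] i \<otimes> (b [^] j \<otimes> ((cc [^] k \<otimes> a) \<otimes> dd [^] l))"
    using c h by (simp add: L_da g.m_assoc)
  also have "\<dots> = a [^] i \<otimes> ((b [^] j \<otimes> a) \<otimes> (cc [^] k \<otimes> (dd [^] k \<otimes> dd [^] l)))"
    using c h by (simp add: L_ca g.m_assoc)
  also have "\<dots> = (a [^] i \<otimes> a) \<otimes> (b [^] j \<otimes> ((cc [^] j \<otimes> cc [^] k) \<otimes> (dd [^] k \<otimes> dd [^] l)))"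
    using c h by (simp add: L_ba g.m_assoc)
  also have "\<dots> = nf ((i + 1) mod 4) j ((j + k) mod 2) ((k + l) mod 2)"
    using h by (simp add: L_aa L_cc L_dd nf_def)
  finally show ?thesis .
qed

lemma nf_b: "i < 4 \<Longrightarrow> j < 2 \<Longrightarrow> k < 2 \<Longrightarrow> l < 2 \<Longrightarrow>
  nf i j k l \<otimes> b = nf i ((j + 1) mod 2) k l"
proof -
  assume h: "i < 4" "j < 2" "k < 2" "l < 2"
  note c = ab_carrier
  have "nf i j k l \<otimes> b = a [^] i \<otimes> (b [^] j \<otimes> (cc [^] k \<otimes> (dd [^] l \<otimes> b)))"
    using c by (simp add: nf_def g.m_assoc)
  also have "\<dots> = a [^] i \<otimes> ((b [^] j \<otimes> b) \<otimes> (cc [^] k \<otimes> dd [^] l))"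
    using c h by (simp add: L_db L_cb g.m_assoc[symmetric])
  also have "\<dots> = nf i ((j + 1) mod 2) k l"
    using h by (simp add: L_bb nf_def)
  finally show ?thesis .
qed

lemma nf_carrier: "nf i j k l \<in> carrier G"
  using ab_carrier by (simp add: nf_def)

definition NFS :: "'a set" where
  "NFS = (\<lambda>(i, j, k, l). nf i j k l) ` ({..<4} \<times> {..<2} \<times> {..<2} \<times> {..<2})"

lemma NFS_carrier: "NFS \<subseteq> carrier G"
  using nf_carrier by (auto simp: NFS_def)

lemma nf_in: "i < 4 \<Longrightarrow> j < 2 \<Longrightarrow> k < 2 \<Longrightarrow> l < 2 \<Longrightarrow> nf i j k l \<in> NFS"
  unfolding NFS_def by (rule image_eqI[where x="(i, j, k, l)"]) auto

lemma NFS_E: "x \<in> NFS \<Longrightarrow> (\<And>i j k l. i < 4 \<Longrightarrow> j < 2 \<Longrightarrow> k < 2 \<Longrightarrow> l < 2 \<Longrightarrow> x = nf i j k l \<Longrightarrow> P) \<Longrightarrow> P"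
  unfolding NFS_def by auto

lemma NFS_a: "x \<in> NFS \<Longrightarrow> x \<otimes> a \<in> NFS"
  by (erule NFS_E) (simp add: nf_a nf_in)

lemma NFS_b: "x \<in> NFS \<Longrightarrow> x \<otimes> b \<in> NFS"
  by (erule NFS_E) (simp add: nf_b nf_in)

lemma inv_a: "inv a = a \<otimes> (a \<otimes> a)"
  using ab_carrier rel_facts(1) by (intro g.inv_equality) (simp_all add: g.m_assoc)

lemma gen_NFS: "g \<in> generate G {a, b} \<Longrightarrow> \<forall>x\<in>NFS. x \<otimes> g \<in> NFS"
proof (induction rule: generate.induct)
  case one
  then show ?case using NFS_carrier by auto
next
  case (incl h)
  then show ?case using NFS_a NFS_b by auto
next
  case (inv h)
  have "x \<otimes> inv a \<in> NFS" if "x \<in> NFS" for x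
  proof -
    have "x \<otimes> inv a = x \<otimes> a \<otimes> a \<otimes> a" using that NFS_carrier ab_carrier
      by (auto simp: inv_a g.m_assoc)
    then show ?thesis using that NFS_a by simp
  qed
  then show ?case using inv NFS_b rel_facts(5) by auto
next
  case (eng h1 h2)
  have "h1 \<in> carrier G" "h2 \<in> carrier G"
    using eng.hyps ab_carrier g.generate_in_carrier[of "{a, b}"] by auto
  then show ?case using eng.IH NFS_carrier by (auto simp: g.m_assoc[symmetric])
qed

lemma finite_generate: "finite (generate G {a, b})"
proof -
  have one: "\<one> \<in> NFS"
  proof -
    have "nf 0 0 0 0 = \<one>" by (simp add: nf_def)
    then show ?thesis using nf_in[of 0 0 0 0] by simp
  qed
  have "generate G {a, b} \<subseteq> NFS"
  proof
    fix g assume g: "g \<in> generate G {a, b}"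
    then have "g \<in> carrier G" using ab_carrier g.generate_in_carrier[of "{a, b}"] by auto
    then show "g \<in> NFS" using gen_NFS[OF g] one by force
  qed
  moreover have "finite NFS" by (simp add: NFS_def)
  ultimately show ?thesis by (rule finite_subset)
qed

end

section \<open>Subfields and automorphisms\<close>

lemma subfieldD:
  assumes "is_subfield K"
  shows "0 \<in> K" "1 \<in> K" "x \<in> K \<Longrightarrow> y \<in> K \<Longrightarrow> x + y \<in> K" "x \<in> K \<Longrightarrow> y \<in> K \<Longrightarrow> x - y \<in> K"
    "x \<in> K \<Longrightarrow> y \<in> K \<Longrightarrow> x * y \<in> K" "x \<in> K \<Longrightarrow> inverse x \<in> K"
    "x \<in> K \<Longrightarrow> - x \<in> K" "x \<in> K \<Longrightarrow> y \<in> K \<Longrightarrow> x / y \<in> K" "x \<in> K \<Longrightarrow> x ^ n \<in> K"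
proof -
  note A = assms[unfolded is_subfield_def]
  show 0: "0 \<in> K" "1 \<in> K" using A by auto
  show "x \<in> K \<Longrightarrow> y \<in> K \<Longrightarrow> x + y \<in> K" "x \<in> K \<Longrightarrow> y \<in> K \<Longrightarrow> x - y \<in> K"
    "x \<in> K \<Longrightarrow> y \<in> K \<Longrightarrow> x * y \<in> K" using A by auto
  show I: "x \<in> K \<Longrightarrow> inverse x \<in> K" for x using A by (cases "x = 0") auto
  show "x \<in> K \<Longrightarrow> - x \<in> K" using A 0 by (metis diff_0)
  show "x \<in> K \<Longrightarrow> y \<in> K \<Longrightarrow> x / y \<in> K" using A I by (simp add: divide_inverse)
  show "x \<in> K \<Longrightarrow> x ^ n \<in> K" using A 0 by (induction n) auto
qed

lemma subfield_UNIV: "is_subfield (UNIV :: 'l::field set)"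
  by (simp add: is_subfield_def)

context
  fixes F K :: "'l::field set" and \<sigma>
  assumes K: "is_subfield K" and s: "\<sigma> \<in> gal_auts F K"
begin

lemma gaD: "x \<in> K \<Longrightarrow> y \<in> K \<Longrightarrow> \<sigma> (x + y) = \<sigma> x + \<sigma> y"
  "x \<in> K \<Longrightarrow> y \<in> K \<Longrightarrow> \<sigma> (x * y) = \<sigma> x * \<sigma> y"
  "\<sigma> 1 = 1" "x \<in> F \<Longrightarrow> \<sigma> x = x" "x \<notin> K \<Longrightarrow> \<sigma> x = x" "bij_betw \<sigma> K K"
  using s by (auto simp: gal_auts_def)

lemma ga_in: "x \<in> K \<Longrightarrow> \<sigma> x \<in> K"
  using gaD(6) by (auto simp: bij_betw_def)

lemma ga_inj: "x \<in> K \<Longrightarrow> y \<in> K \<Longrightarrow> \<sigma> x = \<sigma> y \<longleftrightarrow> x = y"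
  using gaD(6) by (auto simp: bij_betw_def inj_on_def)

lemma ga0: "\<sigma> 0 = 0"
proof -
  have "\<sigma> (0 + 0) = \<sigma> 0 + \<sigma> 0" using gaD(1) subfieldD(1)[OF K] by blast
  then have "\<sigma> 0 + \<sigma> 0 = \<sigma> 0 + 0" by simp
  then show ?thesis by (metis add_left_cancel)
qed

lemma ga_uminus: "x \<in> K \<Longrightarrow> \<sigma> (- x) = - \<sigma> x"
proof -
  assume x: "x \<in> K"
  have "\<sigma> (x + - x) = \<sigma> x + \<sigma> (- x)" using gaD(1) x subfieldD(7)[OF K x] by blast
  then have "\<sigma> x + \<sigma> (- x) = 0" using ga0 by simp
  then show ?thesis by (metis add_eq_0_iff)
qed

lemma ga_diff: "x \<in> K \<Longrightarrow> y \<in> K \<Longrightarrow> \<sigma> (x - y) = \<sigma> x - \<sigma> y"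
  using gaD(1)[of x "- y"] ga_uminus subfieldD(7)[OF K] by simp

lemma ga_zero_iff: "x \<in> K \<Longrightarrow> \<sigma> x = 0 \<longleftrightarrow> x = 0"
  using ga_inj[of x 0] ga0 subfieldD(1)[OF K] by simp

lemma ga_inverse: "x \<in> K \<Longrightarrow> \<sigma> (inverse x) = inverse (\<sigma> x)"
proof (cases "x = 0")
  case True then show ?thesis using ga0 by simp
next
  case False
  assume x: "x \<in> K"
  have "\<sigma> (x * inverse x) = \<sigma> x * \<sigma> (inverse x)" using gaD(2) x subfieldD(6)[OF K x] by blast
  then have "\<sigma> x * \<sigma> (inverse x) = 1" using False gaD(3) by simp
  then show ?thesis by (metis inverse_unique)
qed

lemma ga_divide: "x \<in> K \<Longrightarrow> y \<in> K \<Longrightarrow> \<sigma> (x / y) = \<sigma> x / \<sigma> y"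
  using gaD(2)[of x "inverse y"] ga_inverse subfieldD(6)[OF K] by (simp add: divide_inverse)

lemma ga_power: "x \<in> K \<Longrightarrow> \<sigma> (x ^ n) = \<sigma> x ^ n"
  by (induction n) (simp_all add: gaD(2,3) subfieldD(9)[OF K])

lemma ga_two: "\<sigma> 2 = 2"
proof -
  have "\<sigma> (1 + 1) = \<sigma> 1 + \<sigma> 1" using gaD(1)[of 1 1] subfieldD(2)[OF K] by blast
  then show ?thesis using gaD(3) by simp
qed

lemma ga_minus_one: "\<sigma> (- 1) = - 1"
  using ga_uminus[of 1] gaD(3) subfieldD(2)[OF K] by simp

end

lemma gal_group_carrier: "carrier (gal_group F K) = gal_auts F K"
  by (simp add: gal_group_def)
lemma gal_group_mult: "x \<otimes>\<^bsub>gal_group F K\<^esub> y = x \<circ> y"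
  by (simp add: gal_group_def)
lemma gal_group_one: "\<one>\<^bsub>gal_group F K\<^esub> = id"
  by (simp add: gal_group_def)

lemma gal_auts_comp:
  assumes K: "is_subfield K" and s: "s \<in> gal_auts F K" and t: "t \<in> gal_auts F K"
  shows "s \<circ> t \<in> gal_auts F K"
proof -
  have "bij_betw (s \<circ> t) K K" using gaD(6)[OF K s] gaD(6)[OF K t] by (rule bij_betw_trans[rotated])
  moreover have "\<forall>x\<in>K. \<forall>y\<in>K. (s \<circ> t) (x + y) = (s \<circ> t) x + (s \<circ> t) y \<and> (s \<circ> t) (x * y) = (s \<circ> t) x * (s \<circ> t) y"
    using gaD(1,2)[OF K s] gaD(1,2)[OF K t] ga_in[OF K t] by (simp add: subfieldD[OF K])
  moreover have "(s \<circ> t) 1 = 1" using gaD(3)[OF K s] gaD(3)[OF K t] by simp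
  moreover have "\<forall>x\<in>F. (s \<circ> t) x = x" using gaD(4)[OF K s] gaD(4)[OF K t] by simp
  moreover have "\<forall>x. x \<notin> K \<longrightarrow> (s \<circ> t) x = x" using gaD(5)[OF K s] gaD(5)[OF K t] by simp
  ultimately show ?thesis by (simp add: gal_auts_def)
qed

lemma id_gal_auts: "id \<in> gal_auts F K"
  by (simp add: gal_auts_def)

lemma group_gal_group:
  assumes K: "is_subfield K" and FK: "F \<subseteq> K"
  shows "group (gal_group F K)"
proof (rule groupI)
  show "x \<otimes>\<^bsub>gal_group F K\<^esub> y \<in> carrier (gal_group F K)"
    if "x \<in> carrier (gal_group F K)" "y \<in> carrier (gal_group F K)" for x y
    using that gal_auts_comp[OF K] by (simp add: gal_group_def)
  show "\<one>\<^bsub>gal_group F K\<^esub> \<in> carrier (gal_group F K)" by (simp add: gal_group_def id_gal_auts)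
  show "x \<otimes>\<^bsub>gal_group F K\<^esub> y \<otimes>\<^bsub>gal_group F K\<^esub> z = x \<otimes>\<^bsub>gal_group F K\<^esub> (y \<otimes>\<^bsub>gal_group F K\<^esub> z)" for x y z
    by (simp add: gal_group_def comp_assoc)
  show "\<one>\<^bsub>gal_group F K\<^esub> \<otimes>\<^bsub>gal_group F K\<^esub> x = x" for x by (simp add: gal_group_def)
  show "\<exists>y\<in>carrier (gal_group F K). y \<otimes>\<^bsub>gal_group F K\<^esub> x = \<one>\<^bsub>gal_group F K\<^esub>"
    if "x \<in> carrier (gal_group F K)" for x
  proof -
    have s: "x \<in> gal_auts F K" using that by (simp add: gal_group_def)
    define t where "t = (\<lambda>z. if z \<in> K then inv_into K x z else z)"
    have bx: "bij_betw x K K" using gaD(6)[OF K s] .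
    have tb: "bij_betw t K K"
    proof -
      have "bij_betw (inv_into K x) K K" using bx by (rule bij_betw_inv_into)
      then show ?thesis by (rule bij_betw_cong[THEN iffD1, rotated]) (simp add: t_def)
    qed
    have tx: "t (x z) = z" if "z \<in> K" for z
      using that bx ga_in[OF K s] by (simp add: t_def bij_betw_inv_into_left)
    have xt: "x (t z) = z" if "z \<in> K" for z
      using that bx by (simp add: t_def bij_betw_inv_into_right)
    have tK: "t z \<in> K" if "z \<in> K" for z using tb that by (auto simp: bij_betw_def)
    have add: "t (u + v) = t u + t v" if "u \<in> K" "v \<in> K" for u v
    proof -
      have "x (t u + t v) = u + v" using gaD(1)[OF K s] tK that xt by simp
      then have "t (x (t u + t v)) = t (u + v)" by simp
      then show ?thesis using tx tK that subfieldD(3)[OF K] by metis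
    qed
    have mul: "t (u * v) = t u * t v" if "u \<in> K" "v \<in> K" for u v
    proof -
      have "x (t u * t v) = u * v" using gaD(2)[OF K s] tK that xt by simp
      then have "t (x (t u * t v)) = t (u * v)" by simp
      then show ?thesis using tx tK that subfieldD(5)[OF K] by metis
    qed
    have one: "t 1 = 1" using tx[of 1] gaD(3)[OF K s] subfieldD(2)[OF K] by simp
    have fixF: "t z = z" if "z \<in> F" for z using tx[of z] gaD(4)[OF K s] that FK by auto
    have out: "t z = z" if "z \<notin> K" for z using that by (simp add: t_def)
    have tg: "t \<in> gal_auts F K" unfolding gal_auts_def using tb add mul one fixF out by blast
    have "t \<circ> x = id"
    proof
      fix z show "(t \<circ> x) z = id z"
        by (cases "z \<in> K") (simp_all add: tx gaD(5)[OF K s] out)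
    qed
    then show ?thesis using tg by (auto simp: gal_group_def)
  qed
qed

lemma dedekind:
  fixes S :: "('l::field \<Rightarrow> 'l) set"
  assumes fin: "finite S" and mul: "\<forall>f\<in>S. \<forall>x y. f (x * y) = f x * f y" and one: "\<forall>f\<in>S. f 1 = 1"
  shows "(\<forall>w. (\<Sum>f\<in>S. d f * f w) = 0) \<Longrightarrow> \<forall>f\<in>S. d f = 0"
  using fin mul one
proof (induction S arbitrary: d rule: finite_induct)
  case empty then show ?case by simp
next
  case (insert h T)
  have H: "d h * h w + (\<Sum>f\<in>T. d f * f w) = 0" for w
    using insert.prems(1) insert.hyps by (simp add: sum.insert)
  have T0: "d g0 = 0" if g0: "g0 \<in> T" for g0
  proof -
    have "g0 \<noteq> h" using g0 insert.hyps by auto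
    then obtain y where y: "g0 y \<noteq> h y" by auto
    define d' where "d' f = d f * (f y - h y)" for f
    have "(\<Sum>f\<in>T. d' f * f w) = 0" for w
    proof -
      have e1: "(\<Sum>f\<in>T. d f * f (y * w)) = (\<Sum>f\<in>T. d f * f y * f w)"
        using insert.prems(2) by (intro sum.cong) auto
      have "(\<Sum>f\<in>T. d' f * f w) = (\<Sum>f\<in>T. d f * f y * f w - h y * (d f * f w))"
        by (intro sum.cong) (auto simp: d'_def algebra_simps)
      also have "\<dots> = (\<Sum>f\<in>T. d f * f (y * w)) - h y * (\<Sum>f\<in>T. d f * f w)"
        by (simp add: e1 sum_subtractf sum_distrib_left)
      finally have "(\<Sum>f\<in>T. d' f * f w) = (\<Sum>f\<in>T. d f * f (y * w)) - h y * (\<Sum>f\<in>T. d f * f w)" .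
      also have "\<dots> = - (d h * h (y * w)) + h y * (d h * h w)"
      proof -
        have S1: "(\<Sum>f\<in>T. d f * f (y * w)) = - (d h * h (y * w))"
          using H[of "y * w"] by (simp add: add_eq_0_iff)
        have S2: "(\<Sum>f\<in>T. d f * f w) = - (d h * h w)"
          using H[of w] by (simp add: add_eq_0_iff)
        show ?thesis unfolding S1 S2 by simp
      qed
      also have "\<dots> = 0" using insert.prems(2) by (simp add: algebra_simps)
      finally show ?thesis .
    qed
    then have "\<forall>f\<in>T. d' f = 0" using insert.IH[of d'] insert.prems(2,3) by auto
    then have "d' g0 = 0" using g0 by auto
    then show ?thesis using y by (simp add: d'_def)
  qed
  have "d h = 0" using H[of 1] T0 insert.prems(3) by simp
  then show ?case using T0 by auto
qed

locale GG =
  fixes F :: "'l::field set" and \<phi>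
  assumes two: "(2::'l) \<noteq> 0" and gal: "galois_ext F UNIV" and phi: "\<phi> \<in> iso (gal_group F UNIV) G1"
begin

abbreviation "\<Gamma> \<equiv> gal_group F (UNIV :: 'l set)"

lemma subF: "is_subfield F" using gal by (simp add: galois_ext_def)

lemma grp: "group \<Gamma>" by (rule group_gal_group[OF subfield_UNIV]) simp

interpretation Gm: group \<Gamma> by (rule grp)

lemma fixed_iff: "(\<forall>g\<in>carrier \<Gamma>. g z = z) \<longleftrightarrow> z \<in> F"
proof -
  have "{x \<in> UNIV. \<forall>\<sigma>\<in>carrier \<Gamma>. \<sigma> x = x} = F" using gal by (simp add: galois_ext_def)
  then show ?thesis by blast
qed

lemma act:
  assumes g: "g \<in> carrier \<Gamma>"
  shows "g (x + y) = g x + g y" "g (x * y) = g x * g y" "g 1 = 1" "g 0 = 0"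
    "g (- x) = - g x" "g (x - y) = g x - g y" "g (x / y) = g x / g y"
    "g (inverse x) = inverse (g x)" "g (x ^ n) = g x ^ n" "g 2 = 2" "g (- 1) = - 1"
    "g x = 0 \<longleftrightarrow> x = 0" "g x = g y \<longleftrightarrow> x = y"
proof -
  have s: "g \<in> gal_auts F UNIV" using g by (simp add: gal_group_carrier)
  note U = subfield_UNIV
  show "g (x + y) = g x + g y" "g (x * y) = g x * g y" "g 1 = 1" using gaD[OF U s] by auto
  show "g 0 = 0" by (rule ga0[OF U s])
  show "g (- x) = - g x" using ga_uminus[OF U s] by simp
  show "g (x - y) = g x - g y" using ga_diff[OF U s] by simp
  show "g (x / y) = g x / g y" using ga_divide[OF U s] by simp
  show "g (inverse x) = inverse (g x)" using ga_inverse[OF U s] by simp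
  show "g (x ^ n) = g x ^ n" using ga_power[OF U s] by simp
  show "g 2 = 2" by (rule ga_two[OF U s])
  show "g (- 1) = - 1" by (rule ga_minus_one[OF U s])
  show "g x = 0 \<longleftrightarrow> x = 0" using ga_zero_iff[OF U s] by simp
  show "g x = g y \<longleftrightarrow> x = y" using ga_inj[OF U s] by simp
qed

lemma actF: "g \<in> carrier \<Gamma> \<Longrightarrow> x \<in> F \<Longrightarrow> g x = x"
  using fixed_iff by blast

lemma mult_app: "(g \<otimes>\<^bsub>\<Gamma>\<^esub> h) z = g (h z)" by (simp add: gal_group_mult)
lemma one_app: "\<one>\<^bsub>\<Gamma>\<^esub> z = z" by (simp add: gal_group_one)
lemma inv_app: "g \<in> carrier \<Gamma> \<Longrightarrow> (inv\<^bsub>\<Gamma>\<^esub> g) (g z) = z" "g \<in> carrier \<Gamma> \<Longrightarrow> g ((inv\<^bsub>\<Gamma>\<^esub> g) z) = z"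
proof -
  assume g: "g \<in> carrier \<Gamma>"
  show "(inv\<^bsub>\<Gamma>\<^esub> g) (g z) = z" using Gm.l_inv[OF g] mult_app[of "inv\<^bsub>\<Gamma>\<^esub> g" g z] one_app by metis
  show "g ((inv\<^bsub>\<Gamma>\<^esub> g) z) = z" using Gm.r_inv[OF g] mult_app[of g "inv\<^bsub>\<Gamma>\<^esub> g" z] one_app by metis
qed

definition \<iota> where "\<iota> = inv_into (carrier \<Gamma>) \<phi>"

lemma iota_iso: "\<iota> \<in> iso G1 \<Gamma>"
  unfolding \<iota>_def by (rule Gm.iso_set_sym[OF phi])

lemma iota_hom: "\<iota> \<in> hom G1 \<Gamma>" using iota_iso by (simp add: iso_def)

interpretation ih: group_hom G1 \<Gamma> \<iota>
  using iota_hom group_G1 grp by (simp add: group_hom_def group_hom_axioms_def)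

definition X where "X = \<iota> xc"
definition Y where "Y = \<iota> yc"

lemma rels_XY: "rels \<Gamma> X Y"
  unfolding X_def Y_def by (rule rels_hom[OF group_G1 grp iota_hom rels_G1])

lemma XY_carrier: "X \<in> carrier \<Gamma>" "Y \<in> carrier \<Gamma>"
  using rels_XY by (auto simp: rels_def)

lemma xyc_carrier: "xc \<in> carrier G1" "yc \<in> carrier G1"
  using rels_G1 by (auto simp: rels_def)

lemma gen: "carrier \<Gamma> = generate \<Gamma> {X, Y}"
proof -
  have "carrier \<Gamma> = \<iota> ` carrier G1" using iota_iso by (auto simp: iso_def bij_betw_def)
  also have "carrier G1 = generate G1 {xc, yc}"
    using G1_generated group.generate_incl[OF group_G1, of "{xc, yc}"] xyc_carrier by auto
  also have "\<iota> ` generate G1 {xc, yc} = generate \<Gamma> (\<iota> ` {xc, yc})"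
    using ih.generate_img[of "{xc, yc}"] xyc_carrier by auto
  finally show ?thesis by (simp add: X_def Y_def)
qed

lemma fin: "finite (carrier \<Gamma>)"
  using finite_generate[OF grp rels_XY] gen by simp

lemma gen_induct:
  assumes "P X" "P Y" "P \<one>\<^bsub>\<Gamma>\<^esub>" "P (inv\<^bsub>\<Gamma>\<^esub> X)" "P (inv\<^bsub>\<Gamma>\<^esub> Y)"
    "\<And>g h. g \<in> carrier \<Gamma> \<Longrightarrow> h \<in> carrier \<Gamma> \<Longrightarrow> P g \<Longrightarrow> P h \<Longrightarrow> P (g \<otimes>\<^bsub>\<Gamma>\<^esub> h)"
    and g: "g \<in> carrier \<Gamma>"
  shows "P g"
proof -
  have "g \<in> generate \<Gamma> {X, Y}" using g gen by simp
  then show ?thesis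
  proof (induction rule: generate.induct)
    case (eng h1 h2)
    then show ?case using assms(6) gen by auto
  qed (use assms in auto)
qed

definition \<Psi> where "\<Psi> g = Phi Q hx hy (\<phi> g)"

lemma phi_hom: "\<phi> \<in> hom \<Gamma> G1" using phi by (simp add: iso_def)

lemma Psi_hom: "\<Psi> \<in> hom \<Gamma> Q"
proof -
  have "Phi Q hx hy \<circ> \<phi> \<in> hom \<Gamma> Q"
    using hom_compose[OF phi_hom Phi_hom[OF group_Q rels_Q]] .
  then show ?thesis by (simp add: \<Psi>_def[abs_def] o_def)
qed

interpretation Ph: group_hom \<Gamma> Q \<Psi>
  using Psi_hom group_Q grp by (simp add: group_hom_def group_hom_axioms_def)

lemma phi_iota: "x \<in> carrier G1 \<Longrightarrow> \<phi> (\<iota> x) = x"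
proof -
  assume x: "x \<in> carrier G1"
  have "\<phi> ` carrier \<Gamma> = carrier G1" using phi by (auto simp: iso_def bij_betw_def)
  then show ?thesis unfolding \<iota>_def using x f_inv_into_f[of x \<phi> "carrier \<Gamma>"] by auto
qed

lemma Psi_X: "\<Psi> X = hx"
  by (simp add: \<Psi>_def X_def phi_iota xyc_carrier Phi_xc[OF group_Q rels_Q])
lemma Psi_Y: "\<Psi> Y = hy"
  by (simp add: \<Psi>_def Y_def phi_iota xyc_carrier Phi_yc[OF group_Q rels_Q])

lemma Psi_mult: "g \<in> carrier \<Gamma> \<Longrightarrow> h \<in> carrier \<Gamma> \<Longrightarrow> \<Psi> (g \<otimes>\<^bsub>\<Gamma>\<^esub> h) = \<Psi> g \<otimes>\<^bsub>Q\<^esub> \<Psi> h"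
  by simp
lemma Psi_inv: "g \<in> carrier \<Gamma> \<Longrightarrow> \<Psi> (inv\<^bsub>\<Gamma>\<^esub> g) = inv\<^bsub>Q\<^esub> \<Psi> g"
  by simp
lemma Psi_one: "\<Psi> \<one>\<^bsub>\<Gamma>\<^esub> = \<one>\<^bsub>Q\<^esub>"
  by simp
lemma Psi_carrier: "g \<in> carrier \<Gamma> \<Longrightarrow> \<Psi> g \<in> carrier Q"
  by simp

end

definition qk :: "int \<times> bool \<times> int \<Rightarrow> int" where "qk q = fst q"
definition qe :: "int \<times> bool \<times> int \<Rightarrow> bool" where "qe q = fst (snd q)"
definition qm :: "int \<times> bool \<times> int \<Rightarrow> int" where "qm q = snd (snd q)"

definition par :: "int \<times> bool \<times> int \<Rightarrow> bool" where
  "par q \<longleftrightarrow> q \<in> carrier Q \<and> (qe q \<longleftrightarrow> odd (qk q + qm q))"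

lemma four_cases: "0 \<le> (k::int) \<Longrightarrow> k < 4 \<Longrightarrow> k = 0 \<or> k = 1 \<or> k = 2 \<or> k = 3" by auto

lemma parE:
  assumes "par q"
  obtains k m where "q = (k, odd (k + m), m)" "k = 0 \<or> k = 1 \<or> k = 2 \<or> k = 3" "m = 0 \<or> m = 1 \<or> m = 2 \<or> m = 3"
proof -
  obtain k e m where q: "q = (k, e, m)" by (cases q) auto
  have "0 \<le> k" "k < 4" "0 \<le> m" "m < 4" using assms q by (auto simp: par_def Q_carrier)
  then show ?thesis using that[of k m] four_cases[of k] four_cases[of m] assms q
    by (auto simp: par_def qe_def qk_def qm_def)
qed

lemma par_mult: "par p \<Longrightarrow> par q \<Longrightarrow> par (p \<otimes>\<^bsub>Q\<^esub> q)"
  by (erule parE, erule parE, elim disjE) (simp_all add: Q_mult par_def Q_carrier qe_def qk_def qm_def)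

lemma par_inv: "par p \<Longrightarrow> par (inv\<^bsub>Q\<^esub> p)"
  by (erule parE, elim disjE) (simp_all add: Q_inv Q_carrier par_def qe_def qk_def qm_def)

lemma par_hx: "par hx" and par_hy: "par hy" and par_one: "par \<one>\<^bsub>Q\<^esub>"
  by (simp_all add: par_def hx_def hy_def Q_carrier qe_def qk_def qm_def Q_one)

definition chia :: "int \<times> bool \<times> int \<Rightarrow> 'a::ring_1" where
  "chia q = (if even (qm q) then 1 else - 1)"
definition chib :: "int \<times> bool \<times> int \<Rightarrow> 'a::ring_1" where
  "chib q = (if even (qk q) then 1 else - 1)"
definition e4 :: "int \<times> bool \<times> int \<Rightarrow> 'a::ring_1" where
  "e4 q = (if qm q = 0 then 1 else - 1)"
definition c4 :: "int \<times> bool \<times> int \<Rightarrow> 'a::ring_1" where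
  "c4 q = (if even (qm q) then e4 q else 0)"
definition eD :: "int \<times> bool \<times> int \<Rightarrow> 'a::ring_1" where
  "eD q = (if qk q = 0 \<or> qk q = 1 then 1 else - 1)"
definition cD :: "int \<times> bool \<times> int \<Rightarrow> 'a::ring_1" where
  "cD q = (if even (qm q) then eD q else 0)"

lemma chia_mult: "par p \<Longrightarrow> par q \<Longrightarrow> chia (p \<otimes>\<^bsub>Q\<^esub> q) = chia p * chia q"
  by (erule parE, erule parE, elim disjE) (simp_all add: Q_mult chia_def qm_def)
lemma chib_mult: "par p \<Longrightarrow> par q \<Longrightarrow> chib (p \<otimes>\<^bsub>Q\<^esub> q) = chib p * chib q"
  by (erule parE, erule parE, elim disjE) (simp_all add: Q_mult chib_def qk_def)
lemma chia_inv: "par p \<Longrightarrow> chia (inv\<^bsub>Q\<^esub> p) = chia p"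
  by (erule parE, elim disjE) (simp_all add: Q_inv Q_carrier chia_def qm_def)
lemma chib_inv: "par p \<Longrightarrow> chib (inv\<^bsub>Q\<^esub> p) = chib p"
  by (erule parE, elim disjE) (simp_all add: Q_inv Q_carrier chib_def qk_def)

lemma c4_eq: "par p \<Longrightarrow> par q \<Longrightarrow> even (qm p) \<Longrightarrow>
    (c4 (inv\<^bsub>Q\<^esub> p \<otimes>\<^bsub>Q\<^esub> q) :: 'a::ring_1) = e4 p * c4 q"
  by (erule parE, erule parE, elim disjE) (simp_all add: Q_inv Q_carrier Q_mult c4_def e4_def qm_def)

lemma cD_eq: "par p \<Longrightarrow> par q \<Longrightarrow> even (qm p) \<Longrightarrow>
    (cD (inv\<^bsub>Q\<^esub> p \<otimes>\<^bsub>Q\<^esub> q) :: 'a::ring_1) = eD p * cD q"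
  by (erule parE, erule parE, elim disjE) (simp_all add: Q_inv Q_carrier Q_mult cD_def eD_def qm_def qk_def)

lemma chia_eq: "par p \<Longrightarrow> par q \<Longrightarrow> (chia (inv\<^bsub>Q\<^esub> p \<otimes>\<^bsub>Q\<^esub> q) :: 'a::ring_1) = chia p * chia q"
  by (simp add: chia_mult chia_inv par_inv)
lemma chib_eq: "par p \<Longrightarrow> par q \<Longrightarrow> (chib (inv\<^bsub>Q\<^esub> p \<otimes>\<^bsub>Q\<^esub> q) :: 'a::ring_1) = chib p * chib q"
  by (simp add: chib_mult chib_inv par_inv)

lemma qm_conj: "par p \<Longrightarrow> par q \<Longrightarrow> qm (inv\<^bsub>Q\<^esub> p \<otimes>\<^bsub>Q\<^esub> q \<otimes>\<^bsub>Q\<^esub> p) = qm q"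
  by (erule parE, erule parE, elim disjE) (simp_all add: Q_inv Q_carrier Q_mult qm_def)

lemma hx_conj: "par q \<Longrightarrow> even (qm q) \<Longrightarrow> even (qk q) \<Longrightarrow> inv\<^bsub>Q\<^esub> hx \<otimes>\<^bsub>Q\<^esub> q \<otimes>\<^bsub>Q\<^esub> hx = q"
  by (erule parE, elim disjE) (simp_all add: Q_inv Q_carrier Q_mult qm_def qk_def hx_def)

lemma pm_one: "chia q = (1::'a::ring_1) \<or> chia q = - 1" "chib q = (1::'a) \<or> chib q = - 1"
  "e4 q = (1::'a) \<or> e4 q = - 1" "eD q = (1::'a) \<or> eD q = - 1"
  by (simp_all add: chia_def chib_def e4_def eD_def)

context GG begin

interpretation Gm: group \<Gamma> by (rule grp)
interpretation Ph: group_hom \<Gamma> Q \<Psi>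
  using Psi_hom group_Q grp by (simp add: group_hom_def group_hom_axioms_def)

lemma par_Psi: "g \<in> carrier \<Gamma> \<Longrightarrow> par (\<Psi> g)"
  by (rule gen_induct[where P="\<lambda>g. par (\<Psi> g)"])
     (simp_all add: Psi_X Psi_Y par_hx par_hy par_one par_inv par_mult XY_carrier)

lemma fixed_XY: "X z = z \<Longrightarrow> Y z = z \<Longrightarrow> z \<in> F"
proof -
  assume x: "X z = z" and y: "Y z = z"
  have "\<forall>g\<in>carrier \<Gamma>. g z = z"
  proof
    fix g assume g: "g \<in> carrier \<Gamma>"
    show "g z = z"
    proof (rule gen_induct[where P="\<lambda>g. g z = z", OF _ _ _ _ _ _ g])
      show "(inv\<^bsub>\<Gamma>\<^esub> X) z = z" using inv_app(1)[OF XY_carrier(1), of z] x by simp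
      show "(inv\<^bsub>\<Gamma>\<^esub> Y) z = z" using inv_app(1)[OF XY_carrier(2), of z] y by simp
    qed (use x y in \<open>simp_all add: mult_app one_app\<close>)
  qed
  then show ?thesis using fixed_iff by blast
qed

lemma act_pm: "g \<in> carrier \<Gamma> \<Longrightarrow> c = 1 \<or> c = - 1 \<Longrightarrow> g c = c"
  using act(3,11) by auto

lemma char_eigen:
  fixes \<kappa> :: "int \<times> bool \<times> int \<Rightarrow> 'l"
  assumes km: "\<And>p q. par p \<Longrightarrow> par q \<Longrightarrow> \<kappa> (p \<otimes>\<^bsub>Q\<^esub> q) = \<kappa> p * \<kappa> q"
    and ki: "\<And>p. par p \<Longrightarrow> \<kappa> (inv\<^bsub>Q\<^esub> p) = \<kappa> p"
    and kv: "\<And>p. \<kappa> p = 1 \<or> \<kappa> p = - 1"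
    and k1: "\<kappa> \<one>\<^bsub>Q\<^esub> = 1"
    and x: "X u = \<kappa> hx * u" and y: "Y u = \<kappa> hy * u"
    and g: "g \<in> carrier \<Gamma>"
  shows "g u = \<kappa> (\<Psi> g) * u"
proof -
  have sq: "\<kappa> p * \<kappa> p = 1" for p using kv[of p] by auto
  have invc: "(inv\<^bsub>\<Gamma>\<^esub> Z) u = \<kappa> (\<Psi> Z) * u" if Z: "Z \<in> carrier \<Gamma>" and zu: "Z u = \<kappa> (\<Psi> Z) * u" for Z
  proof -
    have "u = (inv\<^bsub>\<Gamma>\<^esub> Z) (Z u)" using inv_app(1)[OF Z] by simp
    also have "\<dots> = \<kappa> (\<Psi> Z) * (inv\<^bsub>\<Gamma>\<^esub> Z) u"
      using zu act(2)[OF Gm.inv_closed[OF Z]] act_pm[OF Gm.inv_closed[OF Z] kv] by simp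
    finally have "\<kappa> (\<Psi> Z) * u = \<kappa> (\<Psi> Z) * (\<kappa> (\<Psi> Z) * (inv\<^bsub>\<Gamma>\<^esub> Z) u)" by simp
    then show ?thesis using sq by (simp add: mult.assoc[symmetric])
  qed
  show ?thesis
  proof (rule gen_induct[where P="\<lambda>g. g u = \<kappa> (\<Psi> g) * u", OF _ _ _ _ _ _ g])
    show "X u = \<kappa> (\<Psi> X) * u" using x Psi_X by simp
    show "Y u = \<kappa> (\<Psi> Y) * u" using y Psi_Y by simp
    show "\<one>\<^bsub>\<Gamma>\<^esub> u = \<kappa> (\<Psi> \<one>\<^bsub>\<Gamma>\<^esub>) * u" using k1 by (simp add: one_app)
    show "(inv\<^bsub>\<Gamma>\<^esub> X) u = \<kappa> (\<Psi> (inv\<^bsub>\<Gamma>\<^esub> X)) * u"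
      using invc[OF XY_carrier(1)] x Psi_X ki par_hx XY_carrier by simp
    show "(inv\<^bsub>\<Gamma>\<^esub> Y) u = \<kappa> (\<Psi> (inv\<^bsub>\<Gamma>\<^esub> Y)) * u"
      using invc[OF XY_carrier(2)] y Psi_Y ki par_hy XY_carrier by simp
    show "(g \<otimes>\<^bsub>\<Gamma>\<^esub> h) u = \<kappa> (\<Psi> (g \<otimes>\<^bsub>\<Gamma>\<^esub> h)) * u"
      if "g \<in> carrier \<Gamma>" "h \<in> carrier \<Gamma>" "g u = \<kappa> (\<Psi> g) * u" "h u = \<kappa> (\<Psi> h) * u" for g h
      using that act(2)[of g] act_pm[OF _ kv] km par_Psi by (simp add: mult_app mult.commute)
  qed
qed

definition tw :: "(int \<times> bool \<times> int \<Rightarrow> 'l) \<Rightarrow> 'l \<Rightarrow> 'l" where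
  "tw c w = (\<Sum>g\<in>carrier \<Gamma>. c (\<Psi> g) * g w)"

lemma act_sum: "g \<in> carrier \<Gamma> \<Longrightarrow> g (\<Sum>x\<in>A. f x) = (\<Sum>x\<in>A. g (f x))"
proof (induction A rule: infinite_finite_induct)
  case (infinite A) then show ?case using act(4) by simp
next
  case empty then show ?case using act(4) by simp
next
  case (insert x A) then show ?case using act(1)[OF insert.prems] by simp
qed

lemma bij_left: "h \<in> carrier \<Gamma> \<Longrightarrow> bij_betw (\<lambda>g. h \<otimes>\<^bsub>\<Gamma>\<^esub> g) (carrier \<Gamma>) (carrier \<Gamma>)"
proof (rule bij_betwI[where g="\<lambda>g. inv\<^bsub>\<Gamma>\<^esub> h \<otimes>\<^bsub>\<Gamma>\<^esub> g"])
  assume h: "h \<in> carrier \<Gamma>"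
  show "(\<lambda>g. h \<otimes>\<^bsub>\<Gamma>\<^esub> g) \<in> carrier \<Gamma> \<rightarrow> carrier \<Gamma>" using h by auto
  show "(\<lambda>g. inv\<^bsub>\<Gamma>\<^esub> h \<otimes>\<^bsub>\<Gamma>\<^esub> g) \<in> carrier \<Gamma> \<rightarrow> carrier \<Gamma>" using h by auto
  show "inv\<^bsub>\<Gamma>\<^esub> h \<otimes>\<^bsub>\<Gamma>\<^esub> (h \<otimes>\<^bsub>\<Gamma>\<^esub> x) = x" if "x \<in> carrier \<Gamma>" for x
    using h that by (simp add: Gm.m_assoc[symmetric])
  show "h \<otimes>\<^bsub>\<Gamma>\<^esub> (inv\<^bsub>\<Gamma>\<^esub> h \<otimes>\<^bsub>\<Gamma>\<^esub> y) = y" if "y \<in> carrier \<Gamma>" for y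
    using h that by (simp add: Gm.m_assoc[symmetric])
qed

lemma tw_eigen:
  assumes h: "h \<in> carrier \<Gamma>" and cF: "\<And>q. c q \<in> F"
    and ceq: "\<And>g. g \<in> carrier \<Gamma> \<Longrightarrow> c (\<Psi> (inv\<^bsub>\<Gamma>\<^esub> h \<otimes>\<^bsub>\<Gamma>\<^esub> g)) = lam * c (\<Psi> g)"
  shows "h (tw c w) = lam * tw c w"
proof -
  define f where "f g = c (\<Psi> (inv\<^bsub>\<Gamma>\<^esub> h \<otimes>\<^bsub>\<Gamma>\<^esub> g)) * g w" for g
  have "h (tw c w) = (\<Sum>g\<in>carrier \<Gamma>. c (\<Psi> g) * h (g w))"
    unfolding tw_def using h by (simp add: act_sum act(2) actF cF)
  also have "\<dots> = (\<Sum>g\<in>carrier \<Gamma>. f (h \<otimes>\<^bsub>\<Gamma>\<^esub> g))"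
  proof (rule sum.cong)
    fix g assume g: "g \<in> carrier \<Gamma>"
    have "inv\<^bsub>\<Gamma>\<^esub> h \<otimes>\<^bsub>\<Gamma>\<^esub> (h \<otimes>\<^bsub>\<Gamma>\<^esub> g) = g" using h g by (simp add: Gm.m_assoc[symmetric])
    then show "c (\<Psi> g) * h (g w) = f (h \<otimes>\<^bsub>\<Gamma>\<^esub> g)" by (simp add: f_def mult_app)
  qed simp
  also have "\<dots> = (\<Sum>g\<in>carrier \<Gamma>. f g)"
    by (rule sum.reindex_bij_betw[OF bij_left[OF h]])
  also have "\<dots> = lam * tw c w"
    unfolding tw_def f_def by (simp add: ceq sum_distrib_left mult.assoc)
  finally show ?thesis .
qed

lemma tw_nonzero:
  assumes "c \<one>\<^bsub>Q\<^esub> \<noteq> 0"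
  shows "\<exists>w. tw c w \<noteq> 0"
proof (rule ccontr)
  assume "\<not> (\<exists>w. tw c w \<noteq> 0)"
  then have "\<forall>w. (\<Sum>g\<in>carrier \<Gamma>. c (\<Psi> g) * g w) = 0" by (simp add: tw_def)
  then have "\<forall>g\<in>carrier \<Gamma>. c (\<Psi> g) = 0"
    using dedekind[OF fin, of "\<lambda>g. c (\<Psi> g)"] act(2,3) by auto
  then show False using assms by (metis Gm.one_closed Ph.hom_one)
qed

lemma F1: "(1::'l) \<in> F" "(-1::'l) \<in> F" "(0::'l) \<in> F"
  using subfieldD[OF subF] by auto

lemma vals_F: "(chia q :: 'l) \<in> F" "(chib q :: 'l) \<in> F" "(c4 q :: 'l) \<in> F" "(cD q :: 'l) \<in> F"
  "(e4 q :: 'l) \<in> F" "(eD q :: 'l) \<in> F"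
  using F1 by (simp_all add: chia_def chib_def c4_def cD_def e4_def eD_def)

lemma Psi_invmult: "h \<in> carrier \<Gamma> \<Longrightarrow> g \<in> carrier \<Gamma> \<Longrightarrow> \<Psi> (inv\<^bsub>\<Gamma>\<^esub> h \<otimes>\<^bsub>\<Gamma>\<^esub> g) = inv\<^bsub>Q\<^esub> (\<Psi> h) \<otimes>\<^bsub>Q\<^esub> \<Psi> g"
  by simp

lemma eigen_a: "\<exists>r. r \<noteq> 0 \<and> (\<forall>g\<in>carrier \<Gamma>. g r = chia (\<Psi> g) * r)"
proof -
  obtain w where w: "tw chia w \<noteq> 0" using tw_nonzero[of chia] by (auto simp: chia_def Q_one qm_def)
  have "h (tw chia w) = chia (\<Psi> h) * tw chia w" if "h \<in> carrier \<Gamma>" for h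
    using that by (intro tw_eigen) (simp_all add: vals_F Psi_invmult chia_eq par_Psi)
  then show ?thesis using w by blast
qed

lemma eigen_b: "\<exists>r. r \<noteq> 0 \<and> (\<forall>g\<in>carrier \<Gamma>. g r = chib (\<Psi> g) * r)"
proof -
  obtain w where w: "tw chib w \<noteq> 0" using tw_nonzero[of chib] by (auto simp: chib_def Q_one qk_def)
  have "h (tw chib w) = chib (\<Psi> h) * tw chib w" if "h \<in> carrier \<Gamma>" for h
    using that by (intro tw_eigen) (simp_all add: vals_F Psi_invmult chib_eq par_Psi)
  then show ?thesis using w by blast
qed

lemma eigen_4: "\<exists>r. r \<noteq> 0 \<and> (\<forall>g\<in>carrier \<Gamma>. even (qm (\<Psi> g)) \<longrightarrow> g r = e4 (\<Psi> g) * r)"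
proof -
  obtain w where w: "tw c4 w \<noteq> 0" using tw_nonzero[of c4] by (auto simp: c4_def e4_def Q_one qm_def)
  have "h (tw c4 w) = e4 (\<Psi> h) * tw c4 w" if "h \<in> carrier \<Gamma>" "even (qm (\<Psi> h))" for h
    using that by (intro tw_eigen) (simp_all add: vals_F Psi_invmult c4_eq par_Psi)
  then show ?thesis using w by blast
qed

lemma eigen_D: "\<exists>r. r \<noteq> 0 \<and> (\<forall>g\<in>carrier \<Gamma>. even (qm (\<Psi> g)) \<longrightarrow> g r = eD (\<Psi> g) * r)"
proof -
  obtain w where w: "tw cD w \<noteq> 0" using tw_nonzero[of cD] by (auto simp: cD_def eD_def Q_one qm_def qk_def)
  have "h (tw cD w) = eD (\<Psi> h) * tw cD w" if "h \<in> carrier \<Gamma>" "even (qm (\<Psi> h))" for h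
    using that by (intro tw_eigen) (simp_all add: vals_F Psi_invmult cD_eq par_Psi)
  then show ?thesis using w by blast
qed

end

lemma qm_even_invmult: "par p \<Longrightarrow> par q \<Longrightarrow> even (qm (inv\<^bsub>Q\<^esub> p \<otimes>\<^bsub>Q\<^esub> q)) \<longleftrightarrow> (even (qm p) \<longleftrightarrow> even (qm q))"
  by (erule parE, erule parE, elim disjE) (simp_all add: Q_inv Q_carrier Q_mult qm_def)

lemma qm_zero_invmult: "par p \<Longrightarrow> par q \<Longrightarrow> qm (inv\<^bsub>Q\<^esub> p \<otimes>\<^bsub>Q\<^esub> q) = 0 \<longleftrightarrow> qm p = qm q"
  by (erule parE, erule parE, elim disjE) (simp_all add: Q_inv Q_carrier Q_mult qm_def)

lemma hy_shift: "par q \<Longrightarrow> even (qm q) \<Longrightarrow> odd (qk q) \<Longrightarrow>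
    even (qm (inv\<^bsub>Q\<^esub> hy \<otimes>\<^bsub>Q\<^esub> q)) \<and> even (qk (inv\<^bsub>Q\<^esub> hy \<otimes>\<^bsub>Q\<^esub> q))"
  by (erule parE, elim disjE) (simp_all add: Q_inv Q_carrier Q_mult qm_def qk_def hy_def)

lemma e4_qm: "qm p = qm q \<Longrightarrow> e4 p = e4 q" by (simp add: e4_def)

context GG begin

interpretation Gm: group \<Gamma> by (rule grp)
interpretation Ph: group_hom \<Gamma> Q \<Psi>
  using Psi_hom group_Q grp by (simp add: group_hom_def group_hom_axioms_def)

lemmas XYc = XY_carrier

lemma four: "(4::'l) \<noteq> 0"
proof -
  have "(4::'l) = 2 * 2" by simp
  then show ?thesis using two mult_eq_0_iff by metis
qed

lemma Psi_vals: "\<Psi> X = (0, True, 1)" "\<Psi> Y = (1, True, 0)"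
  "\<Psi> (X \<otimes>\<^bsub>\<Gamma>\<^esub> X) = (0, False, 2)" "\<Psi> (Y \<otimes>\<^bsub>\<Gamma>\<^esub> X) = (1, False, 1)"
  "\<Psi> (X \<otimes>\<^bsub>\<Gamma>\<^esub> Y) = (3, False, 1)" "\<Psi> \<one>\<^bsub>\<Gamma>\<^esub> = (0, False, 0)"
  using XYc by (simp_all add: Psi_X Psi_Y hx_def hy_def Q_mult Q_one)

lemma fix_even:
  assumes z: "\<And>h. h \<in> carrier \<Gamma> \<Longrightarrow> even (qm (\<Psi> h)) \<Longrightarrow> h z = z"
    and g: "g1 \<in> carrier \<Gamma>" "g2 \<in> carrier \<Gamma>" and e: "even (qm (\<Psi> g1)) \<longleftrightarrow> even (qm (\<Psi> g2))"
  shows "g1 z = g2 z"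
proof -
  define h where "h = inv\<^bsub>\<Gamma>\<^esub> g2 \<otimes>\<^bsub>\<Gamma>\<^esub> g1"
  have hc: "h \<in> carrier \<Gamma>" using g by (simp add: h_def)
  have "even (qm (\<Psi> h))" using g e par_Psi by (simp add: h_def qm_even_invmult)
  then have hz: "h z = z" using z hc by blast
  have "g1 = g2 \<otimes>\<^bsub>\<Gamma>\<^esub> h" using g by (simp add: h_def Gm.m_assoc[symmetric])
  then show ?thesis using hz by (simp add: mult_app)
qed

lemma fix_zero:
  assumes z: "\<And>h. h \<in> carrier \<Gamma> \<Longrightarrow> qm (\<Psi> h) = 0 \<Longrightarrow> h z = z"
    and g: "g1 \<in> carrier \<Gamma>" "g2 \<in> carrier \<Gamma>" and e: "qm (\<Psi> g1) = qm (\<Psi> g2)"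
  shows "g1 z = g2 z"
proof -
  define h where "h = inv\<^bsub>\<Gamma>\<^esub> g2 \<otimes>\<^bsub>\<Gamma>\<^esub> g1"
  have hc: "h \<in> carrier \<Gamma>" using g by (simp add: h_def)
  have "qm (\<Psi> h) = 0" using g e par_Psi by (simp add: h_def qm_zero_invmult)
  then have hz: "h z = z" using z hc by blast
  have "g1 = g2 \<otimes>\<^bsub>\<Gamma>\<^esub> h" using g by (simp add: h_def Gm.m_assoc[symmetric])
  then show ?thesis using hz by (simp add: mult_app)
qed

lemma chia_vals: "chia (0::int, True, 1::int) = (- 1 :: 'l)" "chia (1::int, True, 0::int) = (1::'l)"
  "chib (0::int, True, 1::int) = (1 :: 'l)" "chib (1::int, True, 0::int) = (- 1::'l)"
  by (simp_all add: chia_def chib_def qm_def qk_def)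

lemma D1:
  assumes r0: "r \<noteq> 0" and r: "\<And>g. g \<in> carrier \<Gamma> \<Longrightarrow> g r = chia (\<Psi> g) * r"
    and z: "\<And>h. h \<in> carrier \<Gamma> \<Longrightarrow> even (qm (\<Psi> h)) \<Longrightarrow> h z = z"
  shows "\<exists>p\<in>F. \<exists>q\<in>F. z = p + q * r"
proof -
  have Xr: "X r = - r" using r[OF XYc(1)] Psi_vals chia_vals by simp
  have Yr: "Y r = r" using r[OF XYc(2)] Psi_vals chia_vals by simp
  have "(X \<otimes>\<^bsub>\<Gamma>\<^esub> X) z = \<one>\<^bsub>\<Gamma>\<^esub> z"
    by (rule fix_even) (use z XYc Psi_vals in \<open>auto simp: qm_def\<close>)
  then have XX: "X (X z) = z" by (simp add: mult_app one_app)
  have "(Y \<otimes>\<^bsub>\<Gamma>\<^esub> X) z = X z"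
    by (rule fix_even) (use z XYc Psi_vals in \<open>auto simp: qm_def\<close>)
  then have YX: "Y (X z) = X z" by (simp add: mult_app)
  have Yz: "Y z = z" using z[OF XYc(2)] Psi_vals by (simp add: qm_def)
  define p where "p = (z + X z) / 2"
  define q where "q = (z - X z) / (2 * r)"
  have "X p = p" using XX XYc by (simp add: p_def act add.commute)
  moreover have "Y p = p" using YX Yz XYc by (simp add: p_def act)
  ultimately have pF: "p \<in> F" by (rule fixed_XY)
  have "X q = q" using XX XYc Xr by (simp add: q_def act) (simp add: divide_simps)
  moreover have "Y q = q" using YX Yz Yr XYc by (simp add: q_def act)
  ultimately have qF: "q \<in> F" by (rule fixed_XY)
  have "z = p + q * r" using two four r0 by (simp add: p_def q_def field_simps)
  then show ?thesis using pF qF by blast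
qed

lemma conj_X: "h \<in> carrier \<Gamma> \<Longrightarrow> h \<otimes>\<^bsub>\<Gamma>\<^esub> X = X \<otimes>\<^bsub>\<Gamma>\<^esub> (inv\<^bsub>\<Gamma>\<^esub> X \<otimes>\<^bsub>\<Gamma>\<^esub> h \<otimes>\<^bsub>\<Gamma>\<^esub> X)"
  using XYc by (simp add: Gm.m_assoc[symmetric])

lemma C4_norm:
  assumes r0: "r \<noteq> 0" and r: "\<And>g. g \<in> carrier \<Gamma> \<Longrightarrow> g r = chia (\<Psi> g) * r"
  shows "\<exists>p\<in>F. \<exists>q\<in>F. p * p - q * q * (r * r) = - 1"
proof -
  obtain \<theta> where t0: "\<theta> \<noteq> 0" and t: "\<And>g. g \<in> carrier \<Gamma> \<Longrightarrow> even (qm (\<Psi> g)) \<Longrightarrow> g \<theta> = e4 (\<Psi> g) * \<theta>"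
    using eigen_4 by blast
  have Xt0: "X \<theta> \<noteq> 0" using t0 act(12)[OF XYc(1)] by simp
  define \<gamma> where "\<gamma> = X \<theta> / \<theta>"
  have e4nz: "e4 q \<noteq> (0::'l)" for q by (simp add: e4_def)
  have gfix: "h \<gamma> = \<gamma>" if h: "h \<in> carrier \<Gamma>" and he: "even (qm (\<Psi> h))" for h
  proof -
    define k where "k = inv\<^bsub>\<Gamma>\<^esub> X \<otimes>\<^bsub>\<Gamma>\<^esub> h \<otimes>\<^bsub>\<Gamma>\<^esub> X"
    have kc: "k \<in> carrier \<Gamma>" using h XYc by (simp add: k_def)
    have "qm (\<Psi> k) = qm (\<Psi> h)" using h XYc par_Psi by (simp add: k_def qm_conj)
    then have kt: "k \<theta> = e4 (\<Psi> h) * \<theta>" using t[OF kc] he e4_qm by metis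
    have "h (X \<theta>) = X (k \<theta>)" using conj_X[OF h] by (metis k_def mult_app)
    also have "\<dots> = e4 (\<Psi> h) * X \<theta>" using kt act(2)[OF XYc(1)] act_pm[OF XYc(1) pm_one(3)] by simp
    finally have "h (X \<theta>) = e4 (\<Psi> h) * X \<theta>" .
    then show ?thesis using t[OF h he] e4nz act(7)[OF h] by (simp add: \<gamma>_def)
  qed
  have "\<exists>p\<in>F. \<exists>q\<in>F. \<gamma> = p + q * r" by (rule D1[OF r0]) (simp_all add: r gfix)
  then obtain p q where pq: "p \<in> F" "q \<in> F" "\<gamma> = p + q * r" by blast
  have XXt: "X (X \<theta>) = - \<theta>"
  proof -
    have c: "X \<otimes>\<^bsub>\<Gamma>\<^esub> X \<in> carrier \<Gamma>" using XYc by simp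
    have "(X \<otimes>\<^bsub>\<Gamma>\<^esub> X) \<theta> = e4 (0::int, False, 2::int) * \<theta>"
      using t[OF c] unfolding Psi_vals(3) by (simp add: qm_def)
    then show ?thesis by (simp add: mult_app e4_def qm_def)
  qed
  have "X \<gamma> * \<gamma> = - 1"
    using XXt Xt0 t0 act(7)[OF XYc(1)] by (simp add: \<gamma>_def)
  moreover have "X \<gamma> = p - q * r"
    using pq act[OF XYc(1)] actF[OF XYc(1)] r[OF XYc(1)] Psi_vals chia_vals by simp
  ultimately have "(p - q * r) * (p + q * r) = - 1" using pq by simp
  then have "p * p - q * q * (r * r) = - 1" by (simp add: algebra_simps)
  then show ?thesis using pq by blast
qed

lemma D4_norm:
  assumes r0: "r \<noteq> 0" and r: "\<And>g. g \<in> carrier \<Gamma> \<Longrightarrow> g r = chia (\<Psi> g) * r"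
    and s0: "s \<noteq> 0" and s: "\<And>g. g \<in> carrier \<Gamma> \<Longrightarrow> g s = chib (\<Psi> g) * s"
  shows "\<exists>p\<in>F. \<exists>q\<in>F. (s * s) * (p * p - q * q * (r * r)) = 1"
proof -
  obtain \<theta> where t0: "\<theta> \<noteq> 0" and t: "\<And>g. g \<in> carrier \<Gamma> \<Longrightarrow> even (qm (\<Psi> g)) \<Longrightarrow> g \<theta> = eD (\<Psi> g) * \<theta>"
    using eigen_D by blast
  have Xt0: "X \<theta> \<noteq> 0" using t0 act(12)[OF XYc(1)] by simp
  define \<gamma> where "\<gamma> = X \<theta> / \<theta>"
  have eDnz: "eD q \<noteq> (0::'l)" for q by (simp add: eD_def)
  have gfix: "h \<gamma> = \<gamma>" if h: "h \<in> carrier \<Gamma>" and he: "even (qm (\<Psi> h))" and hk: "even (qk (\<Psi> h))" for h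
  proof -
    define k where "k = inv\<^bsub>\<Gamma>\<^esub> X \<otimes>\<^bsub>\<Gamma>\<^esub> h \<otimes>\<^bsub>\<Gamma>\<^esub> X"
    have kc: "k \<in> carrier \<Gamma>" using h XYc by (simp add: k_def)
    have "\<Psi> k = \<Psi> h" using h XYc par_Psi he hk hx_conj by (simp add: k_def Psi_X)
    then have kt: "k \<theta> = eD (\<Psi> h) * \<theta>" using t[OF kc] he by metis
    have "h (X \<theta>) = X (k \<theta>)" using conj_X[OF h] by (metis k_def mult_app)
    also have "\<dots> = eD (\<Psi> h) * X \<theta>" using kt act(2)[OF XYc(1)] act_pm[OF XYc(1) pm_one(4)] by simp
    finally have "h (X \<theta>) = eD (\<Psi> h) * X \<theta>" .
    then show ?thesis using t[OF h he] eDnz act(7)[OF h] by (simp add: \<gamma>_def)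
  qed
  have Yt: "Y \<theta> = \<theta>"
    using t[OF XYc(2)] unfolding Psi_vals(2) by (simp add: qm_def eD_def qk_def)
  have Ygam: "Y \<gamma> = - \<gamma>"
  proof -
    define g0 where "g0 = inv\<^bsub>\<Gamma>\<^esub> (X \<otimes>\<^bsub>\<Gamma>\<^esub> Y) \<otimes>\<^bsub>\<Gamma>\<^esub> (Y \<otimes>\<^bsub>\<Gamma>\<^esub> X)"
    have g0c: "g0 \<in> carrier \<Gamma>" using XYc by (simp add: g0_def)
    have "\<Psi> g0 = \<Psi> (inv\<^bsub>\<Gamma>\<^esub> (X \<otimes>\<^bsub>\<Gamma>\<^esub> Y)) \<otimes>\<^bsub>Q\<^esub> \<Psi> (Y \<otimes>\<^bsub>\<Gamma>\<^esub> X)"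
      unfolding g0_def by (rule Ph.hom_mult) (simp_all add: XYc)
    also have "\<Psi> (inv\<^bsub>\<Gamma>\<^esub> (X \<otimes>\<^bsub>\<Gamma>\<^esub> Y)) = inv\<^bsub>Q\<^esub> (\<Psi> (X \<otimes>\<^bsub>\<Gamma>\<^esub> Y))"
      by (rule Ph.hom_inv) (simp add: XYc)
    also have "inv\<^bsub>Q\<^esub> (\<Psi> (X \<otimes>\<^bsub>\<Gamma>\<^esub> Y)) \<otimes>\<^bsub>Q\<^esub> \<Psi> (Y \<otimes>\<^bsub>\<Gamma>\<^esub> X) = inv\<^bsub>Q\<^esub> (3, False, 1) \<otimes>\<^bsub>Q\<^esub> (1, False, 1)"
      unfolding Psi_vals(4,5) ..
    also have "\<dots> = (2, False, 0)" by (simp add: Q_inv Q_carrier Q_mult)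
    finally have Pg0: "\<Psi> g0 = (2, False, 0)" .
    have g0t: "g0 \<theta> = - \<theta>" using t[OF g0c] unfolding Pg0 by (simp add: qm_def eD_def qk_def)
    have YX: "Y \<otimes>\<^bsub>\<Gamma>\<^esub> X = (X \<otimes>\<^bsub>\<Gamma>\<^esub> Y) \<otimes>\<^bsub>\<Gamma>\<^esub> g0"
      using XYc by (simp add: g0_def Gm.m_assoc[symmetric])
    have "Y (X \<theta>) = (X \<otimes>\<^bsub>\<Gamma>\<^esub> Y) (g0 \<theta>)" using YX by (metis mult_app)
    also have "\<dots> = - X \<theta>" using g0t Yt act(5)[OF XYc(1)] act(5)[OF XYc(2)] by (simp add: mult_app)
    finally have "Y (X \<theta>) = - X \<theta>" .
    then show ?thesis using Yt act(7)[OF XYc(2)] by (simp add: \<gamma>_def)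
  qed
  have XXt: "X (X \<theta>) = \<theta>"
  proof -
    have c: "X \<otimes>\<^bsub>\<Gamma>\<^esub> X \<in> carrier \<Gamma>" using XYc by simp
    have "(X \<otimes>\<^bsub>\<Gamma>\<^esub> X) \<theta> = eD (0::int, False, 2::int) * \<theta>"
      using t[OF c] unfolding Psi_vals(3) by (simp add: qm_def)
    then show ?thesis by (simp add: mult_app eD_def qk_def)
  qed
  have XG: "X \<gamma> * \<gamma> = 1"
    using XXt Xt0 t0 act(7)[OF XYc(1)] by (simp add: \<gamma>_def)
  have Xs: "X s = s" using s[OF XYc(1)] unfolding Psi_vals(1) by (simp add: chib_def qk_def)
  have Ys: "Y s = - s" using s[OF XYc(2)] unfolding Psi_vals(2) by (simp add: chib_def qk_def)
  define u where "u = \<gamma> / s"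
  have Yu: "Y u = u" using Ygam Ys act(7)[OF XYc(2)] s0 by (simp add: u_def)
  have ufix: "h u = u" if h: "h \<in> carrier \<Gamma>" and he: "even (qm (\<Psi> h))" for h
  proof (cases "even (qk (\<Psi> h))")
    case True
    have "h s = s" using s[OF h] True by (simp add: chib_def)
    then show ?thesis using gfix[OF h he True] act(7)[OF h] by (simp add: u_def)
  next
    case False
    define k where "k = inv\<^bsub>\<Gamma>\<^esub> Y \<otimes>\<^bsub>\<Gamma>\<^esub> h"
    have kc: "k \<in> carrier \<Gamma>" using h XYc by (simp add: k_def)
    have "even (qm (\<Psi> k)) \<and> even (qk (\<Psi> k))"
      using hy_shift[OF par_Psi[OF h] he False] h XYc by (simp add: k_def Psi_Y)
    then have ku: "k u = u"
      using gfix[OF kc] s[OF kc] act(7)[OF kc] by (simp add: u_def chib_def)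
    have "h = Y \<otimes>\<^bsub>\<Gamma>\<^esub> k" using h XYc by (simp add: k_def Gm.m_assoc[symmetric])
    then have "h u = Y (k u)" by (simp add: mult_app)
    then show ?thesis using ku Yu by simp
  qed
  have "\<exists>p\<in>F. \<exists>q\<in>F. u = p + q * r" by (rule D1[OF r0]) (simp_all add: r ufix)
  then obtain p q where pq: "p \<in> F" "q \<in> F" "u = p + q * r" by blast
  have gam: "\<gamma> = s * (p + q * r)" using pq(3) s0 by (simp add: u_def field_simps)
  have "X \<gamma> = s * (p - q * r)"
    using gam pq act[OF XYc(1)] actF[OF XYc(1)] r[OF XYc(1)] Psi_vals chia_vals Xs by simp
  then have "(s * (p - q * r)) * (s * (p + q * r)) = 1" using XG gam by simp
  then have "(s * s) * (p * p - q * q * (r * r)) = 1" by (simp add: algebra_simps)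
  then show ?thesis using pq by blast
qed

lemma neg_self_zero: "(x::'l) = - x \<Longrightarrow> x = 0"
  using two by (metis add_eq_0_iff2 mult_2 mult_eq_0_iff)

lemma not_rigid:
  assumes r0: "r \<noteq> 0" and r: "\<And>g. g \<in> carrier \<Gamma> \<Longrightarrow> g r = chia (\<Psi> g) * r"
  shows "\<not> rigid F (- (r * r))"
proof
  assume R: "rigid F (- (r * r))"
  define c where "c = - (r * r)"
  have V: "{x1 * x1 + c * x2 * x2 |x1 x2. x1 \<in> F \<and> x2 \<in> F} - {0}
       = {t * t |t. t \<in> F - {0}} \<union> {c * t * t |t. t \<in> F - {0}}"
    using R by (simp add: rigid_def c_def)
  have Xr: "X r = - r" using r[OF XYc(1)] Psi_vals chia_vals by simp
  have Yr: "Y r = r" using r[OF XYc(2)] Psi_vals chia_vals by simp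
  have rF: "r \<notin> F"
  proof
    assume "r \<in> F"
    then have "X r = r" using actF[OF XYc(1)] by simp
    then show False using Xr r0 neg_self_zero by simp
  qed
  note sf = subfieldD[OF subF]
  obtain p q where pq: "p \<in> F" "q \<in> F" "p * p - q * q * (r * r) = - 1"
    using C4_norm[OF r0] r by blast
  have "-1 \<in> {x1 * x1 + c * x2 * x2 |x1 x2. x1 \<in> F \<and> x2 \<in> F} - {0}"
  proof -
    have "-1 = p * p + c * q * q" using pq(3) by (simp add: c_def algebra_simps)
    then show ?thesis using pq(1,2) by auto
  qed
  then have "-1 \<in> {t * t |t. t \<in> F - {0}} \<union> {c * t * t |t. t \<in> F - {0}}" using V by simp
  then obtain i where iF: "i \<in> F" and ii: "i * i = -1"
  proof (elim UnE)
    assume "-1 \<in> {t * t |t. t \<in> F - {0}}"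
    then show ?thesis using that by auto
  next
    assume "-1 \<in> {c * t * t |t. t \<in> F - {0}}"
    then obtain t where t: "t \<in> F" "t \<noteq> 0" "-1 = c * t * t" by auto
    then have "(r * t) * (r * t) = 1" by (simp add: c_def algebra_simps)
    then have "r * t = 1 \<or> r * t = -1" by (simp add: square_eq_1_iff)
    then have "r = 1 / t \<or> r = - 1 / t" using t(2) by (auto simp: field_simps)
    moreover have "1 / t \<in> F" "- 1 / t \<in> F" using t(1) sf by auto
    ultimately show ?thesis using rF by auto
  qed
  obtain s where s0: "s \<noteq> 0" and s: "\<And>g. g \<in> carrier \<Gamma> \<Longrightarrow> g s = chib (\<Psi> g) * s"
    using eigen_b by blast
  have Ys: "Y s = - s" using s[OF XYc(2)] unfolding Psi_vals(2) by (simp add: chib_def qk_def)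
  define b where "b = s * s"
  have bF: "b \<in> F"
  proof -
    have "g b = b" if g: "g \<in> carrier \<Gamma>" for g
    proof -
      have "chib (\<Psi> g) * chib (\<Psi> g) = (1::'l)" by (simp add: chib_def)
      then show ?thesis using s[OF g] act(2)[OF g] by (simp add: b_def algebra_simps)
    qed
    then show ?thesis using fixed_iff by blast
  qed
  have b0: "b \<noteq> 0" using s0 by (simp add: b_def)
  obtain p' q' where pq': "p' \<in> F" "q' \<in> F" "b * (p' * p' - q' * q' * (r * r)) = 1"
    using D4_norm[OF r0 r s0 s] by (auto simp: b_def)
  have "b \<in> {x1 * x1 + c * x2 * x2 |x1 x2. x1 \<in> F \<and> x2 \<in> F} - {0}"
  proof -
    have "(b * p') * (b * p') + c * (b * q') * (b * q') = b * (b * (p' * p' - q' * q' * (r * r)))"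
      by (simp add: c_def algebra_simps)
    also have "\<dots> = b" using pq'(3) by simp
    finally have "b = (b * p') * (b * p') + c * (b * q') * (b * q')" by simp
    moreover have "b * p' \<in> F" "b * q' \<in> F" using bF pq' sf by auto
    ultimately show ?thesis using b0 by blast
  qed
  then have "b \<in> {t * t |t. t \<in> F - {0}} \<union> {c * t * t |t. t \<in> F - {0}}" using V by simp
  then show False
  proof (elim UnE)
    assume "b \<in> {t * t |t. t \<in> F - {0}}"
    then obtain t where t: "t \<in> F" "s * s = t * t" by (auto simp: b_def)
    then have "s = t \<or> s = - t" using square_eq_iff by blast
    then have "s \<in> F" using t(1) sf by auto
    then have "Y s = s" using actF[OF XYc(2)] by simp
    then show False using Ys s0 neg_self_zero by simp
  next
    assume "b \<in> {c * t * t |t. t \<in> F - {0}}"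
    then obtain t where t: "t \<in> F" "s * s = c * t * t" by (auto simp: b_def)
    have "(i * t * r) * (i * t * r) = (i * i) * (r * r * t * t)" by (simp add: algebra_simps)
    then have "c * t * t = (i * t * r) * (i * t * r)" using ii by (simp add: c_def algebra_simps)
    then have "s * s = (i * t * r) * (i * t * r)" using t(2) by simp
    then have "s = i * t * r \<or> s = - (i * t * r)" by (rule square_eq_iff[THEN iffD1])
    moreover have "Y (i * t * r) = i * t * r"
      using act(2)[OF XYc(2)] actF[OF XYc(2)] iF t(1) Yr by simp
    ultimately have "Y s = s" using act(5)[OF XYc(2)] by auto
    then show False using Ys s0 neg_self_zero by simp
  qed
qed

end

locale cyc =
  fixes F E :: "'l::field set" and h
  assumes E: "is_subfield E" and FE: "F \<subseteq> E" and h: "h \<in> iso (gal_group F E) C4"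
begin

abbreviation "GE \<equiv> gal_group F E"

lemma grpE: "group GE" by (rule group_gal_group[OF E FE])

interpretation Ge: group GE by (rule grpE)
interpretation hh: group_hom GE C4 h
  using h grpE by (simp add: group_hom_def group_hom_axioms_def iso_def)

definition \<sigma> where "\<sigma> = inv_into (carrier GE) h 1"

lemma h_bij: "bij_betw h (carrier GE) (carrier C4)" using h by (simp add: iso_def)

lemma sig: "\<sigma> \<in> carrier GE" "h \<sigma> = 1"
proof -
  have 1: "(1::int) \<in> carrier C4" by (simp add: carrier_integer_mod_group)
  show "\<sigma> \<in> carrier GE" using h_bij 1 unfolding \<sigma>_def
    by (metis bij_betw_imp_surj_on inv_into_into)
  show "h \<sigma> = 1" using h_bij 1 unfolding \<sigma>_def
    by (metis bij_betw_imp_surj_on f_inv_into_f)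
qed

lemma h_pow: "h (\<sigma> [^]\<^bsub>GE\<^esub> (n::nat)) = int n mod 4"
  using sig by (simp add: hh.hom_nat_pow)

lemma h_range: "\<tau> \<in> carrier GE \<Longrightarrow> 0 \<le> h \<tau> \<and> h \<tau> < 4"
  using h_bij by (auto simp: bij_betw_def carrier_integer_mod_group)

lemma all_pow: "\<tau> \<in> carrier GE \<Longrightarrow> \<tau> = \<sigma> [^]\<^bsub>GE\<^esub> nat (h \<tau>)"
proof -
  assume t: "\<tau> \<in> carrier GE"
  have "h (\<sigma> [^]\<^bsub>GE\<^esub> nat (h \<tau>)) = int (nat (h \<tau>)) mod 4" by (rule h_pow)
  then have "h (\<sigma> [^]\<^bsub>GE\<^esub> nat (h \<tau>)) = h \<tau>" using h_range[OF t] by simp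
  moreover have "\<sigma> [^]\<^bsub>GE\<^esub> nat (h \<tau>) \<in> carrier GE" using sig by simp
  ultimately show ?thesis using h_bij t by (metis bij_betw_def inj_onD)
qed

lemma pow4: "\<sigma> [^]\<^bsub>GE\<^esub> (4::nat) = id"
proof -
  have "h (\<sigma> [^]\<^bsub>GE\<^esub> (4::nat)) = h \<one>\<^bsub>GE\<^esub>" by (simp add: h_pow)
  then have "\<sigma> [^]\<^bsub>GE\<^esub> (4::nat) = \<one>\<^bsub>GE\<^esub>" using h_bij sig
    by (metis Ge.nat_pow_closed Ge.one_closed bij_betw_def inj_onD)
  then show ?thesis by (simp add: gal_group_one)
qed

lemma pow_Suc_app: "(\<sigma> [^]\<^bsub>GE\<^esub> Suc (n::nat)) z = \<sigma> ((\<sigma> [^]\<^bsub>GE\<^esub> n) z)"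
  using sig Ge.nat_pow_Suc2[of \<sigma> n] by (simp add: gal_group_mult)

lemma pow_0_app: "(\<sigma> [^]\<^bsub>GE\<^esub> (0::nat)) z = z"
  by (simp add: gal_group_one)

lemma sig_ga: "\<sigma> \<in> gal_auts F E" using sig by (simp add: gal_group_carrier)

lemma pow_ga: "\<sigma> [^]\<^bsub>GE\<^esub> (n::nat) \<in> gal_auts F E" using sig by (simp flip: gal_group_carrier)

lemma fixed_sig:
  assumes "galois_ext F E" "x \<in> E" "\<sigma> x = x"
  shows "x \<in> F"
proof -
  have pw: "(\<sigma> [^]\<^bsub>GE\<^esub> n) x = x" for n :: nat
    by (induction n) (simp_all add: gal_group_one gal_group_mult assms(3))
  have "\<forall>\<tau>\<in>carrier GE. \<tau> x = x" using all_pow pw by metis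
  then have "x \<in> {x \<in> E. \<forall>\<tau>\<in>carrier GE. \<tau> x = x}" using assms(2) by simp
  then show ?thesis using assms(1) unfolding galois_ext_def by blast
qed

end

context GG begin

interpretation Gm: group \<Gamma> by (rule grp)

lemma adjoin_mem: "r \<in> adjoin F r" by (auto simp: adjoin_def)

lemma E_eigen:
  assumes aF: "a \<in> F" and ra: "r ^ 2 = a" and rF: "r \<notin> F" and KE: "adjoin F r \<subseteq> E"
    and gE: "galois_ext F E" and iso: "gal_group F E \<cong> C4"
    and g: "g \<in> carrier \<Gamma>"
  shows "g r = chia (\<Psi> g) * r"
proof -
  have E: "is_subfield E" and FE: "F \<subseteq> E" using gE by (auto simp: galois_ext_def)
  obtain h where h: "h \<in> iso (gal_group F E) C4" using iso by (auto simp: is_iso_def)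
  interpret C: cyc F E h by (unfold_locales) (fact E, fact FE, fact h)
  note sf = subfieldD[OF E]
  note sg = C.sig_ga
  have rE: "r \<in> E" using KE adjoin_mem by auto
  have sin: "x \<in> E \<Longrightarrow> C.\<sigma> x \<in> E" for x using ga_in[OF E sg] .
  have sadd: "x \<in> E \<Longrightarrow> y \<in> E \<Longrightarrow> C.\<sigma> (x + y) = C.\<sigma> x + C.\<sigma> y" for x y using gaD(1)[OF E sg] .
  have smul: "x \<in> E \<Longrightarrow> y \<in> E \<Longrightarrow> C.\<sigma> (x * y) = C.\<sigma> x * C.\<sigma> y" for x y using gaD(2)[OF E sg] .
  have s4: "C.\<sigma> (C.\<sigma> (C.\<sigma> (C.\<sigma> x))) = x" for x
  proof -
    have "(C.\<sigma> [^]\<^bsub>C.GE\<^esub> Suc (Suc (Suc (Suc 0)))) x = C.\<sigma> (C.\<sigma> (C.\<sigma> (C.\<sigma> x)))"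
      by (simp only: C.pow_Suc_app C.pow_0_app)
    moreover have "Suc (Suc (Suc (Suc 0))) = (4::nat)" by simp
    ultimately show ?thesis using C.pow4 by simp
  qed
  have normal: "k e \<in> E" if k: "k \<in> carrier \<Gamma>" and e: "e \<in> E" for k e
  proof -
    define e1 where "e1 = C.\<sigma> e"
    define e2 where "e2 = C.\<sigma> e1"
    define e3 where "e3 = C.\<sigma> e2"
    have m: "e1 \<in> E" "e2 \<in> E" "e3 \<in> E" using sin e by (simp_all add: e1_def e2_def e3_def)
    have se3: "C.\<sigma> e3 = e" using s4 by (simp add: e1_def e2_def e3_def)
    define s1 where "s1 = e + e1 + e2 + e3"
    define s2 where "s2 = e * e1 + e * e2 + e * e3 + e1 * e2 + e1 * e3 + e2 * e3"
    define s3 where "s3 = e * e1 * e2 + e * e1 * e3 + e * e2 * e3 + e1 * e2 * e3"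
    define s4 where "s4 = e * e1 * e2 * e3"
    have sm: "s1 \<in> E" "s2 \<in> E" "s3 \<in> E" "s4 \<in> E" using m e sf by (simp_all add: s1_def s2_def s3_def s4_def)
    have "C.\<sigma> s1 = s1" using m e sf by (simp add: s1_def sadd smul se3 e2_def[symmetric] e3_def[symmetric] e1_def[symmetric] algebra_simps)
    then have s1F: "s1 \<in> F" using C.fixed_sig[OF gE sm(1)] by simp
    have "C.\<sigma> s2 = s2" using m e sf by (simp add: s2_def sadd smul se3 e2_def[symmetric] e3_def[symmetric] e1_def[symmetric] algebra_simps)
    then have s2F: "s2 \<in> F" using C.fixed_sig[OF gE sm(2)] by simp
    have "C.\<sigma> s3 = s3" using m e sf by (simp add: s3_def sadd smul se3 e2_def[symmetric] e3_def[symmetric] e1_def[symmetric] algebra_simps)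
    then have s3F: "s3 \<in> F" using C.fixed_sig[OF gE sm(3)] by simp
    have "C.\<sigma> s4 = s4" using m e sf by (simp add: s4_def sadd smul se3 e2_def[symmetric] e3_def[symmetric] e1_def[symmetric] algebra_simps)
    then have s4F: "s4 \<in> F" using C.fixed_sig[OF gE sm(4)] by simp
    have id: "(z - e) * (z - e1) * (z - e2) * (z - e3) = z ^ 4 - s1 * z ^ 3 + s2 * z ^ 2 - s3 * z + s4" for z
      by (simp add: s1_def s2_def s3_def s4_def algebra_simps power2_eq_square power3_eq_cube power4_eq_xxxx)
    have "e ^ 4 - s1 * e ^ 3 + s2 * e ^ 2 - s3 * e + s4 = 0" using id[of e] by simp
    then have "k (e ^ 4 - s1 * e ^ 3 + s2 * e ^ 2 - s3 * e + s4) = 0" using act(4)[OF k] by simp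
    then have "(k e) ^ 4 - s1 * (k e) ^ 3 + s2 * (k e) ^ 2 - s3 * (k e) + s4 = 0"
      using s1F s2F s3F s4F by (simp add: act[OF k] actF[OF k])
    then have "(k e - e) * (k e - e1) * (k e - e2) * (k e - e3) = 0" using id[of "k e"] by simp
    then have "k e = e \<or> k e = e1 \<or> k e = e2 \<or> k e = e3" by auto
    then show ?thesis using m e by auto
  qed
  have YY: "Y (Y z) = z" for z
  proof -
    have "Y \<otimes>\<^bsub>\<Gamma>\<^esub> Y = \<one>\<^bsub>\<Gamma>\<^esub>" using rels_XY by (simp add: rels_def numeral_eq_Suc XYc)
    then show ?thesis by (metis mult_app one_app)
  qed
  define \<tau> where "\<tau> z = (if z \<in> E then Y z else z)" for z
  have tga: "\<tau> \<in> gal_auts F E"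
  proof -
    have "bij_betw \<tau> E E"
    proof (rule bij_betwI[where g=\<tau>])
      show "\<tau> \<in> E \<rightarrow> E" using normal[OF XYc(2)] by (auto simp: \<tau>_def)
      show "\<tau> \<in> E \<rightarrow> E" using normal[OF XYc(2)] by (auto simp: \<tau>_def)
      show "\<tau> (\<tau> x) = x" if "x \<in> E" for x using that normal[OF XYc(2)] YY by (simp add: \<tau>_def)
      show "\<tau> (\<tau> x) = x" if "x \<in> E" for x using that normal[OF XYc(2)] YY by (simp add: \<tau>_def)
    qed
    moreover have "\<forall>x\<in>E. \<forall>y\<in>E. \<tau> (x + y) = \<tau> x + \<tau> y \<and> \<tau> (x * y) = \<tau> x * \<tau> y"
      using sf act[OF XYc(2)] by (simp add: \<tau>_def)
    moreover have "\<tau> 1 = 1" using sf act[OF XYc(2)] by (simp add: \<tau>_def)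
    moreover have "\<forall>x\<in>F. \<tau> x = x" using actF[OF XYc(2)] by (simp add: \<tau>_def)
    moreover have "\<forall>x. x \<notin> E \<longrightarrow> \<tau> x = x" by (simp add: \<tau>_def)
    ultimately show ?thesis by (simp add: gal_auts_def)
  qed
  have tc: "\<tau> \<in> carrier C.GE" using tga by (simp add: gal_group_carrier)
  have tt: "\<tau> \<otimes>\<^bsub>C.GE\<^esub> \<tau> = \<one>\<^bsub>C.GE\<^esub>"
  proof -
    have "\<tau> \<circ> \<tau> = id"
    proof
      fix z show "(\<tau> \<circ> \<tau>) z = id z"
        using normal[OF XYc(2)] YY by (simp add: \<tau>_def)
    qed
    then show ?thesis by (simp add: gal_group_mult gal_group_one)
  qed
  interpret hh: group_hom C.GE C4 h
    using h C.grpE by (simp add: group_hom_def group_hom_axioms_def iso_def)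
  have "(h \<tau> + h \<tau>) mod 4 = 0" using hh.hom_mult[OF tc tc] tt by simp
  then have ht: "h \<tau> = 0 \<or> h \<tau> = 2" using C.h_range[OF tc] by auto
  have sr: "C.\<sigma> r = - r"
  proof -
    have "C.\<sigma> r ^ 2 = r ^ 2" using ga_power[OF E sg rE, of 2] gaD(4)[OF E sg aF] ra by simp
    then have "C.\<sigma> r = r \<or> C.\<sigma> r = - r" by (simp add: power2_eq_iff)
    moreover have "C.\<sigma> r \<noteq> r" using C.fixed_sig[OF gE rE] rF by auto
    ultimately show ?thesis by simp
  qed
  have ssr: "C.\<sigma> (C.\<sigma> r) = r" using sr ga_uminus[OF E sg rE] by simp
  have "\<tau> = C.\<sigma> [^]\<^bsub>C.GE\<^esub> nat (h \<tau>)" by (rule C.all_pow[OF tc])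
  then have "\<tau> r = r"
  proof -
    assume teq: "\<tau> = C.\<sigma> [^]\<^bsub>C.GE\<^esub> nat (h \<tau>)"
    from ht show ?thesis
    proof
      assume "h \<tau> = 0"
      then have "\<tau> = C.\<sigma> [^]\<^bsub>C.GE\<^esub> (0::nat)" using teq by simp
      then show ?thesis by (simp add: gal_group_one)
    next
      assume "h \<tau> = 2"
      then have "\<tau> = C.\<sigma> [^]\<^bsub>C.GE\<^esub> Suc (Suc 0)" using teq by (simp add: numeral_eq_Suc)
      then have "\<tau> r = C.\<sigma> (C.\<sigma> r)" by (simp only: C.pow_Suc_app C.pow_0_app)
      then show ?thesis using ssr by simp
    qed
  qed
  then have Yr: "Y r = r" using rE by (simp add: \<tau>_def)
  have Xr: "X r = - r"
  proof -
    have "X r ^ 2 = r ^ 2" using act(9)[OF XYc(1)] actF[OF XYc(1) aF] ra by metis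
    then have "X r = r \<or> X r = - r" by (simp add: power2_eq_iff)
    moreover have "X r \<noteq> r" using fixed_XY[of r] Yr rF by auto
    ultimately show ?thesis by simp
  qed
  show ?thesis
  proof (rule char_eigen[where \<kappa>=chia, OF _ _ _ _ _ _ g])
    show "X r = chia hx * r" using Xr chia_vals by (simp add: hx_def)
    show "Y r = chia hy * r" using Yr chia_vals by (simp add: hy_def)
    show "\<And>p q. par p \<Longrightarrow> par q \<Longrightarrow> (chia (p \<otimes>\<^bsub>Q\<^esub> q) :: 'l) = chia p * chia q" by (rule chia_mult)
    show "\<And>p. par p \<Longrightarrow> (chia (inv\<^bsub>Q\<^esub> p) :: 'l) = chia p" by (rule chia_inv)
    show "\<And>p. (chia p :: 'l) = 1 \<or> chia p = - 1" by (rule pm_one)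
    show "(chia \<one>\<^bsub>Q\<^esub> :: 'l) = 1" by (simp add: chia_def Q_one qm_def)
  qed
qed

end

lemma qm_mult: "par p \<Longrightarrow> par q \<Longrightarrow> qm (p \<otimes>\<^bsub>Q\<^esub> q) = (qm p + qm q) mod 4"
  by (erule parE, erule parE) (simp add: Q_mult qm_def)

lemma qm_range: "par p \<Longrightarrow> qm p = 0 \<or> qm p = 1 \<or> qm p = 2 \<or> qm p = 3"
  by (erule parE) (auto simp: qm_def)

locale GG2 = GG +
  fixes r0 \<theta>
  assumes r0nz: "r0 \<noteq> 0" and r0e: "\<And>g. g \<in> carrier \<Gamma> \<Longrightarrow> g r0 = chia (\<Psi> g) * r0"
    and tnz: "\<theta> \<noteq> 0" and te: "\<And>g. g \<in> carrier \<Gamma> \<Longrightarrow> even (qm (\<Psi> g)) \<Longrightarrow> g \<theta> = e4 (\<Psi> g) * \<theta>"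
begin

interpretation Gm: group \<Gamma> by (rule grp)
interpretation Ph: group_hom \<Gamma> Q \<Psi>
  using Psi_hom group_Q grp by (simp add: group_hom_def group_hom_axioms_def)

definition E0 :: "'a set" where "E0 = {z. \<forall>h\<in>carrier \<Gamma>. qm (\<Psi> h) = 0 \<longrightarrow> h z = z}"

lemma Xr0: "X r0 = - r0" using r0e[OF XYc(1)] Psi_vals chia_vals by simp
lemma Yr0: "Y r0 = r0" using r0e[OF XYc(2)] Psi_vals chia_vals by simp

lemma XXt: "X (X \<theta>) = - \<theta>"
proof -
  have c: "X \<otimes>\<^bsub>\<Gamma>\<^esub> X \<in> carrier \<Gamma>" using XYc by simp
  have "(X \<otimes>\<^bsub>\<Gamma>\<^esub> X) \<theta> = e4 (0::int, False, 2::int) * \<theta>"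
    using te[OF c] unfolding Psi_vals(3) by (simp add: qm_def)
  then show ?thesis by (simp add: mult_app e4_def qm_def)
qed

lemma Xtnz: "X \<theta> \<noteq> 0" using tnz act(12)[OF XYc(1)] by simp

lemma E0_sub: "is_subfield E0"
  unfolding is_subfield_def E0_def by (auto simp: act)

lemma FE0: "F \<subseteq> E0" unfolding E0_def using actF by auto

lemma r0E: "r0 \<in> E0" unfolding E0_def by (auto simp: r0e chia_def)
lemma tE: "\<theta> \<in> E0" unfolding E0_def by (auto simp: te e4_def)

lemma E0_normal:
  assumes g: "g \<in> carrier \<Gamma>" and z: "z \<in> E0"
  shows "g z \<in> E0"
proof -
  have "h (g z) = g z" if h: "h \<in> carrier \<Gamma>" "qm (\<Psi> h) = 0" for h
  proof -
    define k where "k = inv\<^bsub>\<Gamma>\<^esub> g \<otimes>\<^bsub>\<Gamma>\<^esub> h \<otimes>\<^bsub>\<Gamma>\<^esub> g"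
    have kc: "k \<in> carrier \<Gamma>" using g h by (simp add: k_def)
    have "qm (\<Psi> k) = qm (\<Psi> h)" using g h par_Psi by (simp add: k_def qm_conj)
    then have "k z = z" using z kc h by (auto simp: E0_def)
    moreover have "h \<otimes>\<^bsub>\<Gamma>\<^esub> g = g \<otimes>\<^bsub>\<Gamma>\<^esub> k" using g h by (simp add: k_def Gm.m_assoc[symmetric])
    ultimately show ?thesis by (metis mult_app)
  qed
  then show ?thesis by (simp add: E0_def)
qed

lemma E0_decomp:
  assumes z: "z \<in> E0"
  shows "\<exists>p1\<in>F. \<exists>q1\<in>F. \<exists>p2\<in>F. \<exists>q2\<in>F. z = p1 + q1 * r0 + (p2 + q2 * r0) * \<theta>"
proof -
  have zf: "\<And>h. h \<in> carrier \<Gamma> \<Longrightarrow> qm (\<Psi> h) = 0 \<Longrightarrow> h z = z" using z by (auto simp: E0_def)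
  have XXc: "X \<otimes>\<^bsub>\<Gamma>\<^esub> X \<in> carrier \<Gamma>" using XYc by simp
  have qXX: "qm (\<Psi> (X \<otimes>\<^bsub>\<Gamma>\<^esub> X)) = 2" using Psi_vals(3) by (simp add: qm_def)
  define zp where "zp = (z + X (X z)) / 2"
  define zm where "zm = (z - X (X z)) / 2"
  have cases: "h z = z \<and> h (X (X z)) = X (X z) \<and> e4 (\<Psi> h) = (1::'a) \<or>
               h z = X (X z) \<and> h (X (X z)) = z \<and> e4 (\<Psi> h) = (-1::'a)"
    if h: "h \<in> carrier \<Gamma>" and he: "even (qm (\<Psi> h))" for h
  proof -
    have hXX: "h \<otimes>\<^bsub>\<Gamma>\<^esub> (X \<otimes>\<^bsub>\<Gamma>\<^esub> X) \<in> carrier \<Gamma>" using h XXc by simp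
    have qhXX: "qm (\<Psi> (h \<otimes>\<^bsub>\<Gamma>\<^esub> (X \<otimes>\<^bsub>\<Gamma>\<^esub> X))) = (qm (\<Psi> h) + 2) mod 4"
      using qm_mult[OF par_Psi[OF h] par_Psi[OF XXc]] h XXc qXX by simp
    have XXz: "X (X z) = (X \<otimes>\<^bsub>\<Gamma>\<^esub> X) z" by (simp add: mult_app)
    have hXXz: "h (X (X z)) = (h \<otimes>\<^bsub>\<Gamma>\<^esub> (X \<otimes>\<^bsub>\<Gamma>\<^esub> X)) z" by (simp add: mult_app)
    from qm_range[OF par_Psi[OF h]] he have "qm (\<Psi> h) = 0 \<or> qm (\<Psi> h) = 2" by auto
    then show ?thesis
    proof
      assume q0: "qm (\<Psi> h) = 0"
      have "h z = z" using zf h q0 by simp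
      moreover have "(h \<otimes>\<^bsub>\<Gamma>\<^esub> (X \<otimes>\<^bsub>\<Gamma>\<^esub> X)) z = (X \<otimes>\<^bsub>\<Gamma>\<^esub> X) z"
        by (rule fix_zero) (simp_all add: zf hXX XXc qhXX q0 qXX)
      ultimately show ?thesis using q0 XXz hXXz by (simp add: e4_def)
    next
      assume q2: "qm (\<Psi> h) = 2"
      have q0': "qm (\<Psi> (h \<otimes>\<^bsub>\<Gamma>\<^esub> (X \<otimes>\<^bsub>\<Gamma>\<^esub> X))) = 0" using qhXX q2 by simp
      have q1: "qm (\<Psi> (h \<otimes>\<^bsub>\<Gamma>\<^esub> (X \<otimes>\<^bsub>\<Gamma>\<^esub> X))) = qm (\<Psi> \<one>\<^bsub>\<Gamma>\<^esub>)"
        unfolding q0' Psi_vals(6) by (simp add: qm_def)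
      have "h z = (X \<otimes>\<^bsub>\<Gamma>\<^esub> X) z" by (rule fix_zero) (simp_all add: zf h XXc q2 qXX)
      moreover have "(h \<otimes>\<^bsub>\<Gamma>\<^esub> (X \<otimes>\<^bsub>\<Gamma>\<^esub> X)) z = \<one>\<^bsub>\<Gamma>\<^esub> z"
        by (rule fix_zero[where z=z and ?g1.0="h \<otimes>\<^bsub>\<Gamma>\<^esub> (X \<otimes>\<^bsub>\<Gamma>\<^esub> X)" and ?g2.0="\<one>\<^bsub>\<Gamma>\<^esub>"])
           (simp add: zf, simp add: hXX, simp, rule q1)
      ultimately show ?thesis using q2 XXz hXXz by (simp add: e4_def one_app)
    qed
  qed
  have zpf: "h zp = zp" if "h \<in> carrier \<Gamma>" "even (qm (\<Psi> h))" for h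
    using cases[OF that] act[OF that(1)] by (auto simp: zp_def add.commute)
  have zmf: "h zm = e4 (\<Psi> h) * zm" if "h \<in> carrier \<Gamma>" "even (qm (\<Psi> h))" for h
    using cases[OF that] act[OF that(1)] by (auto simp: zm_def)
  have "\<exists>p\<in>F. \<exists>q\<in>F. zp = p + q * r0" by (rule D1[OF r0nz]) (simp_all add: r0e zpf)
  then obtain p1 q1 where pq1: "p1 \<in> F" "q1 \<in> F" "zp = p1 + q1 * r0" by blast
  have e4nz: "e4 q \<noteq> (0::'a)" for q by (simp add: e4_def)
  have "h (zm / \<theta>) = zm / \<theta>" if h: "h \<in> carrier \<Gamma>" "even (qm (\<Psi> h))" for h
    using zmf[OF h] te[OF h] act(7)[OF h(1)] e4nz by simp
  then have "\<exists>p\<in>F. \<exists>q\<in>F. zm / \<theta> = p + q * r0" by (intro D1[OF r0nz]) (simp_all add: r0e)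
  then obtain p2 q2 where pq2: "p2 \<in> F" "q2 \<in> F" "zm / \<theta> = p2 + q2 * r0" by blast
  have "z = zp + zm" using two by (simp add: zp_def zm_def field_simps)
  also have "zm = (p2 + q2 * r0) * \<theta>" using pq2(3) tnz by (simp add: field_simps)
  finally have "z = p1 + q1 * r0 + (p2 + q2 * r0) * \<theta>" using pq1 by simp
  then show ?thesis using pq1 pq2 by blast
qed

definition res :: "('a \<Rightarrow> 'a) \<Rightarrow> 'a \<Rightarrow> 'a" where
  "res g z = (if z \<in> E0 then g z else z)"

lemma res_ga: assumes g: "g \<in> carrier \<Gamma>" shows "res g \<in> gal_auts F E0"
proof -
  have ig: "inv\<^bsub>\<Gamma>\<^esub> g \<in> carrier \<Gamma>" using g by simp
  have "bij_betw (res g) E0 E0"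
  proof (rule bij_betwI[where g="res (inv\<^bsub>\<Gamma>\<^esub> g)"])
    show "res g \<in> E0 \<rightarrow> E0" using E0_normal[OF g] by (auto simp: res_def)
    show "res (inv\<^bsub>\<Gamma>\<^esub> g) \<in> E0 \<rightarrow> E0" using E0_normal[OF ig] by (auto simp: res_def)
    show "res (inv\<^bsub>\<Gamma>\<^esub> g) (res g x) = x" if "x \<in> E0" for x
      using that E0_normal[OF g] inv_app(1)[OF g] by (simp add: res_def)
    show "res g (res (inv\<^bsub>\<Gamma>\<^esub> g) y) = y" if "y \<in> E0" for y
      using that E0_normal[OF ig] inv_app(2)[OF g] by (simp add: res_def)
  qed
  moreover have "\<forall>x\<in>E0. \<forall>y\<in>E0. res g (x + y) = res g x + res g y \<and> res g (x * y) = res g x * res g y"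
    using subfieldD[OF E0_sub] act[OF g] by (simp add: res_def)
  moreover have "res g 1 = 1" using subfieldD[OF E0_sub] act[OF g] by (simp add: res_def)
  moreover have "\<forall>x\<in>F. res g x = x" using actF[OF g] by (simp add: res_def)
  moreover have "\<forall>x. x \<notin> E0 \<longrightarrow> res g x = x" by (simp add: res_def)
  ultimately show ?thesis by (simp add: gal_auts_def)
qed

lemma agree:
  assumes t1: "t1 \<in> gal_auts F E0" and t2: "t2 \<in> gal_auts F E0"
    and r: "t1 r0 = t2 r0" and t: "t1 \<theta> = t2 \<theta>"
  shows "t1 = t2"
proof
  fix z show "t1 z = t2 z"
  proof (cases "z \<in> E0")
    case True
    then obtain p1 q1 p2 q2 where pq: "p1 \<in> F" "q1 \<in> F" "p2 \<in> F" "q2 \<in> F"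
      and z: "z = p1 + q1 * r0 + (p2 + q2 * r0) * \<theta>" using E0_decomp by blast
    have m: "p1 \<in> E0" "q1 \<in> E0" "p2 \<in> E0" "q2 \<in> E0" using pq FE0 by auto
    note sf = subfieldD[OF E0_sub]
    have "t1 z = p1 + q1 * t1 r0 + (p2 + q2 * t1 r0) * t1 \<theta>"
      using m r0E tE pq sf by (simp add: z gaD[OF E0_sub t1])
    moreover have "t2 z = p1 + q1 * t2 r0 + (p2 + q2 * t2 r0) * t2 \<theta>"
      using m r0E tE pq sf by (simp add: z gaD[OF E0_sub t2])
    ultimately show ?thesis using r t by simp
  next
    case False
    then show ?thesis using gaD(5)[OF E0_sub t1] gaD(5)[OF E0_sub t2] by simp
  qed
qed

lemma res_app: "z \<in> E0 \<Longrightarrow> res g z = g z" by (simp add: res_def)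

lemma a0F: "r0 * r0 \<in> F"
proof -
  have "g (r0 * r0) = r0 * r0" if g: "g \<in> carrier \<Gamma>" for g
  proof -
    have "chia (\<Psi> g) * chia (\<Psi> g) = (1::'a)" by (simp add: chia_def)
    then show ?thesis using r0e[OF g] act(2)[OF g] by (simp add: algebra_simps)
  qed
  then show ?thesis using fixed_iff by blast
qed

lemma XXXt: "X (X (X \<theta>)) = - X \<theta>" using XXt act(5)[OF XYc(1)] by simp

lemma Gal_E0_cases:
  assumes t: "t \<in> gal_auts F E0"
  shows "t = res \<one>\<^bsub>\<Gamma>\<^esub> \<or> t = res X \<or> t = res (X \<otimes>\<^bsub>\<Gamma>\<^esub> X) \<or> t = res (X \<otimes>\<^bsub>\<Gamma>\<^esub> X \<otimes>\<^bsub>\<Gamma>\<^esub> X)"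
proof -
  note sf = subfieldD[OF E0_sub]
  note tD = gaD[OF E0_sub t]
  have XE: "X \<theta> \<in> E0" using E0_normal[OF XYc(1) tE] .
  have "t r0 * t r0 = r0 * r0" using tD(2)[OF r0E r0E] tD(4)[OF a0F] by simp
  then have tr: "t r0 = r0 \<or> t r0 = - r0" using square_eq_iff by blast
  have "h (\<theta> * \<theta>) = \<theta> * \<theta>" if h: "h \<in> carrier \<Gamma>" "even (qm (\<Psi> h))" for h
  proof -
    have "e4 (\<Psi> h) * e4 (\<Psi> h) = (1::'a)" by (simp add: e4_def)
    then show ?thesis using te[OF h] act(2)[OF h(1)] by (simp add: algebra_simps)
  qed
  then have "\<exists>p\<in>F. \<exists>q\<in>F. \<theta> * \<theta> = p + q * r0" by (intro D1[OF r0nz]) (simp_all add: r0e)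
  then obtain pb qb where pqb: "pb \<in> F" "qb \<in> F" "\<theta> * \<theta> = pb + qb * r0" by blast
  have pbE: "pb \<in> E0" "qb \<in> E0" using pqb FE0 by auto
  have tth: "t \<theta> * t \<theta> = pb + qb * t r0"
  proof -
    have "t \<theta> * t \<theta> = t (\<theta> * \<theta>)" using tD(2)[OF tE tE] by simp
    also have "\<dots> = pb + qb * t r0" using pqb(3) pbE r0E sf tD(1,2,4) pqb(1,2) by simp
    finally show ?thesis .
  qed
  have Xth: "X \<theta> * X \<theta> = pb - qb * r0"
  proof -
    have "X \<theta> * X \<theta> = X (\<theta> * \<theta>)" using act(2)[OF XYc(1)] by simp
    also have "\<dots> = pb - qb * r0" using pqb act[OF XYc(1)] actF[OF XYc(1)] Xr0 by simp
    finally show ?thesis .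
  qed
  have XXc: "X \<otimes>\<^bsub>\<Gamma>\<^esub> X \<in> carrier \<Gamma>" "X \<otimes>\<^bsub>\<Gamma>\<^esub> X \<otimes>\<^bsub>\<Gamma>\<^esub> X \<in> carrier \<Gamma>" using XYc by simp_all
  have XXr: "X (X r0) = r0" using Xr0 act(5)[OF XYc(1)] by simp
  have vals: "res \<one>\<^bsub>\<Gamma>\<^esub> r0 = r0" "res \<one>\<^bsub>\<Gamma>\<^esub> \<theta> = \<theta>"
    "res X r0 = - r0" "res X \<theta> = X \<theta>"
    "res (X \<otimes>\<^bsub>\<Gamma>\<^esub> X) r0 = r0" "res (X \<otimes>\<^bsub>\<Gamma>\<^esub> X) \<theta> = - \<theta>"
    "res (X \<otimes>\<^bsub>\<Gamma>\<^esub> X \<otimes>\<^bsub>\<Gamma>\<^esub> X) r0 = - r0" "res (X \<otimes>\<^bsub>\<Gamma>\<^esub> X \<otimes>\<^bsub>\<Gamma>\<^esub> X) \<theta> = - X \<theta>"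
    using r0E tE Xr0 XXr XXt XXXt by (simp_all add: res_app mult_app one_app)
  have g1: "res \<one>\<^bsub>\<Gamma>\<^esub> \<in> gal_auts F E0" "res X \<in> gal_auts F E0"
    "res (X \<otimes>\<^bsub>\<Gamma>\<^esub> X) \<in> gal_auts F E0" "res (X \<otimes>\<^bsub>\<Gamma>\<^esub> X \<otimes>\<^bsub>\<Gamma>\<^esub> X) \<in> gal_auts F E0"
    using res_ga XYc XXc by auto
  from tr show ?thesis
  proof
    assume tr1: "t r0 = r0"
    then have "t \<theta> * t \<theta> = \<theta> * \<theta>" using tth pqb(3) by simp
    then have "t \<theta> = \<theta> \<or> t \<theta> = - \<theta>" using square_eq_iff by blast
    then show ?thesis
    proof
      assume "t \<theta> = \<theta>" then have "t = res \<one>\<^bsub>\<Gamma>\<^esub>" using agree[OF t g1(1)] tr1 vals by simp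
      then show ?thesis by simp
    next
      assume "t \<theta> = - \<theta>" then have "t = res (X \<otimes>\<^bsub>\<Gamma>\<^esub> X)" using agree[OF t g1(3)] tr1 vals by simp
      then show ?thesis by simp
    qed
  next
    assume tr1: "t r0 = - r0"
    then have "t \<theta> * t \<theta> = X \<theta> * X \<theta>" using tth Xth by simp
    then have "t \<theta> = X \<theta> \<or> t \<theta> = - X \<theta>" using square_eq_iff by blast
    then show ?thesis
    proof
      assume "t \<theta> = X \<theta>" then have "t = res X" using agree[OF t g1(2)] tr1 vals by simp
      then show ?thesis by simp
    next
      assume "t \<theta> = - X \<theta>" then have "t = res (X \<otimes>\<^bsub>\<Gamma>\<^esub> X \<otimes>\<^bsub>\<Gamma>\<^esub> X)" using agree[OF t g1(4)] tr1 vals by simp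
      then show ?thesis by simp
    qed
  qed
qed

lemma res_mult: "g \<in> carrier \<Gamma> \<Longrightarrow> h \<in> carrier \<Gamma> \<Longrightarrow> res (g \<otimes>\<^bsub>\<Gamma>\<^esub> h) = res g \<circ> res h"
  by (rule ext) (simp add: res_def mult_app E0_normal)

definition f4 :: "int \<Rightarrow> 'a \<Rightarrow> 'a" where "f4 k = res (X [^]\<^bsub>\<Gamma>\<^esub> nat k)"

lemma f4_vals: "f4 0 = res \<one>\<^bsub>\<Gamma>\<^esub>" "f4 1 = res X" "f4 2 = res (X \<otimes>\<^bsub>\<Gamma>\<^esub> X)"
  "f4 3 = res (X \<otimes>\<^bsub>\<Gamma>\<^esub> X \<otimes>\<^bsub>\<Gamma>\<^esub> X)"
  using XYc by (simp_all add: f4_def numeral_eq_Suc)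

lemma X4: "X [^]\<^bsub>\<Gamma>\<^esub> (4::nat) = \<one>\<^bsub>\<Gamma>\<^esub>" using rels_XY by (simp add: rels_def)

lemma Xpow_mod: "X [^]\<^bsub>\<Gamma>\<^esub> (n::nat) = X [^]\<^bsub>\<Gamma>\<^esub> (n mod 4)"
proof -
  have "n = 4 * (n div 4) + n mod 4" by simp
  then have "X [^]\<^bsub>\<Gamma>\<^esub> n = X [^]\<^bsub>\<Gamma>\<^esub> (4 * (n div 4)) \<otimes>\<^bsub>\<Gamma>\<^esub> X [^]\<^bsub>\<Gamma>\<^esub> (n mod 4)"
    using XYc by (metis Gm.nat_pow_mult)
  also have "X [^]\<^bsub>\<Gamma>\<^esub> (4 * (n div 4)) = \<one>\<^bsub>\<Gamma>\<^esub>"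
    using XYc X4 by (simp add: Gm.nat_pow_pow[symmetric])
  finally show ?thesis using XYc by simp
qed

lemma f4_hom: "f4 \<in> hom C4 (gal_group F E0)"
proof (rule homI)
  show "f4 x \<in> carrier (gal_group F E0)" if "x \<in> carrier C4" for x
    using res_ga[OF Gm.nat_pow_closed[OF XYc(1)]] by (simp add: f4_def gal_group_carrier)
  show "f4 (x \<otimes>\<^bsub>C4\<^esub> y) = f4 x \<otimes>\<^bsub>gal_group F E0\<^esub> f4 y" if "x \<in> carrier C4" "y \<in> carrier C4" for x y
  proof -
    have xy: "0 \<le> x" "x < 4" "0 \<le> y" "y < 4" using that by (auto simp: carrier_integer_mod_group)
    have n: "nat ((x + y) mod 4) = (nat x + nat y) mod 4" using xy by (simp add: nat_mod_distrib nat_add_distrib)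
    have "f4 (x \<otimes>\<^bsub>C4\<^esub> y) = res (X [^]\<^bsub>\<Gamma>\<^esub> (nat x + nat y))"
      by (simp add: f4_def n Xpow_mod[of "nat x + nat y"])
    also have "\<dots> = res (X [^]\<^bsub>\<Gamma>\<^esub> nat x \<otimes>\<^bsub>\<Gamma>\<^esub> X [^]\<^bsub>\<Gamma>\<^esub> nat y)" using XYc by (simp add: Gm.nat_pow_mult)
    also have "\<dots> = res (X [^]\<^bsub>\<Gamma>\<^esub> nat x) \<circ> res (X [^]\<^bsub>\<Gamma>\<^esub> nat y)"
      by (rule res_mult[OF Gm.nat_pow_closed[OF XYc(1)] Gm.nat_pow_closed[OF XYc(1)]])
    also have "\<dots> = f4 x \<otimes>\<^bsub>gal_group F E0\<^esub> f4 y" by (simp add: f4_def gal_group_mult)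
    finally show ?thesis .
  qed
qed

lemma f4_bij: "bij_betw f4 (carrier C4) (carrier (gal_group F E0))"
proof -
  have C: "carrier C4 = {0, 1, 2, 3}" by (auto simp: carrier_integer_mod_group)
  have XXr: "X (X r0) = r0" using Xr0 act(5)[OF XYc(1)] by simp
  have v: "f4 0 r0 = r0" "f4 0 \<theta> = \<theta>" "f4 1 r0 = - r0" "f4 1 \<theta> = X \<theta>"
    "f4 2 r0 = r0" "f4 2 \<theta> = - \<theta>" "f4 3 r0 = - r0" "f4 3 \<theta> = - X \<theta>"
    using r0E tE Xr0 XXr XXt XXXt by (simp_all add: f4_vals res_app mult_app one_app)
  have d: "r0 \<noteq> - r0" "\<theta> \<noteq> - \<theta>" "X \<theta> \<noteq> - X \<theta>"
    using neg_self_zero r0nz tnz Xtnz by blast+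
  have "inj_on f4 {0, 1, 2, 3}"
    unfolding inj_on_def
  proof (intro ballI impI)
    fix j k :: int assume j: "j \<in> {0, 1, 2, 3}" and k: "k \<in> {0, 1, 2, 3}" and e: "f4 j = f4 k"
    have er: "f4 j r0 = f4 k r0" and et: "f4 j \<theta> = f4 k \<theta>" using e by simp_all
    show "j = k" using j k er et d by (auto simp: v)
  qed
  moreover have "f4 ` {0, 1, 2, 3} = gal_auts F E0"
  proof
    show "f4 ` {0, 1, 2, 3} \<subseteq> gal_auts F E0" using res_ga XYc by (auto simp: f4_def)
    show "gal_auts F E0 \<subseteq> f4 ` {0, 1, 2, 3}"
    proof
      fix t assume t: "t \<in> gal_auts F E0"
      show "t \<in> f4 ` {0, 1, 2, 3}" using Gal_E0_cases[OF t] by (auto simp: f4_vals[symmetric])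
    qed
  qed
  ultimately show ?thesis by (simp add: bij_betw_def C gal_group_carrier)
qed

lemma E0_C4: "gal_group F E0 \<cong> C4"
proof -
  have "f4 \<in> iso C4 (gal_group F E0)" using f4_hom f4_bij by (simp add: iso_def)
  then have "C4 \<cong> gal_group F E0" by (rule is_isoI)
  then show ?thesis by (rule group.iso_sym[OF group_integer_mod_group])
qed

lemma E0_galois: "galois_ext F E0"
proof -
  have alg: "algebraic_ext F E0" using gal by (auto simp: galois_ext_def algebraic_ext_def)
  have "{x \<in> E0. \<forall>\<sigma>\<in>carrier (gal_group F E0). \<sigma> x = x} = F"
  proof
    show "F \<subseteq> {x \<in> E0. \<forall>\<sigma>\<in>carrier (gal_group F E0). \<sigma> x = x}"
      using FE0 gaD(4)[OF E0_sub] by (auto simp: gal_group_carrier)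
    show "{x \<in> E0. \<forall>\<sigma>\<in>carrier (gal_group F E0). \<sigma> x = x} \<subseteq> F"
    proof
      fix x assume x: "x \<in> {x \<in> E0. \<forall>\<sigma>\<in>carrier (gal_group F E0). \<sigma> x = x}"
      then have xE: "x \<in> E0" and fx: "res X x = x" using res_ga[OF XYc(1)] by (auto simp: gal_group_carrier)
      have "X x = x" using fx xE by (simp add: res_app)
      moreover have "Y x = x" using xE XYc(2) Psi_vals(2) by (auto simp: E0_def qm_def)
      ultimately show "x \<in> F" by (rule fixed_XY)
    qed
  qed
  then show ?thesis using subF E0_sub FE0 alg by (simp add: galois_ext_def)
qed

lemma r0_notF: "r0 \<notin> F"
proof
  assume "r0 \<in> F"
  then have "X r0 = r0" using actF[OF XYc(1)] by simp
  then show False using Xr0 r0nz neg_self_zero by simp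
qed

lemma adjoin_E0: "adjoin F r0 \<subseteq> E0"
  unfolding adjoin_def using E0_sub FE0 r0E by auto

end

lemma Inter_subfield:
  assumes A: "\<And>S. S \<in> A \<Longrightarrow> is_subfield S"
  shows "is_subfield (\<Inter>A)"
  unfolding is_subfield_def
proof (intro conjI ballI impI)
  show "0 \<in> \<Inter>A" using subfieldD(1)[OF A] by blast
  show "1 \<in> \<Inter>A" using subfieldD(2)[OF A] by blast
  fix x y assume x: "x \<in> \<Inter>A"
  show "inverse x \<in> \<Inter>A" if "x \<noteq> 0"
  proof (rule InterI)
    fix S assume S: "S \<in> A" show "inverse x \<in> S" using subfieldD(6)[OF A[OF S]] x S by blast
  qed
  assume y: "y \<in> \<Inter>A"
  show "x + y \<in> \<Inter>A"
  proof (rule InterI)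
    fix S assume S: "S \<in> A" show "x + y \<in> S" using subfieldD(3)[OF A[OF S]] x y S by blast
  qed
  show "x - y \<in> \<Inter>A"
  proof (rule InterI)
    fix S assume S: "S \<in> A" show "x - y \<in> S" using subfieldD(4)[OF A[OF S]] x y S by blast
  qed
  show "x * y \<in> \<Inter>A"
  proof (rule InterI)
    fix S assume S: "S \<in> A" show "x * y \<in> S" using subfieldD(5)[OF A[OF S]] x y S by blast
  qed
qed

lemma adjoin_subfield: "is_subfield (adjoin F r)"
  unfolding adjoin_def by (rule Inter_subfield) simp

lemma adjoin_min: "is_subfield S \<Longrightarrow> F \<subseteq> S \<Longrightarrow> r \<in> S \<Longrightarrow> adjoin F r \<subseteq> S"
  unfolding adjoin_def by (rule Inter_lower) simp

lemma adjoin_F: "F \<subseteq> adjoin F r" "r \<in> adjoin F r"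
  unfolding adjoin_def by blast+

lemma adjoin_sub2:
  assumes r0: "(r::'a::field) \<noteq> 0" and F1: "r * r \<in> F" and F2: "r * s \<in> F"
  shows "adjoin F s \<subseteq> adjoin F r"
proof (rule adjoin_min[OF adjoin_subfield])
  show "F \<subseteq> adjoin F r" by (rule adjoin_F)
  have "s = (r * s) / (r * r) * r" using r0 by (simp add: field_simps)
  moreover have "(r * s) / (r * r) * r \<in> adjoin F r"
  proof -
    note A = subfieldD[OF adjoin_subfield[of F r]]
    have "r * s \<in> adjoin F r" "r * r \<in> adjoin F r" using F1 F2 adjoin_F(1) by blast+
    then have "(r * s) / (r * r) \<in> adjoin F r" by (rule A(8))
    then show ?thesis using A(5) adjoin_F(2) by blast
  qed
  ultimately show "s \<in> adjoin F r" by simp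
qed

theorem proposition3p8:
  fixes F :: "'l::field set"
  assumes "(2::'l) \<noteq> 0"
    and "galois_ext F (UNIV :: 'l set)"
    and "gal_group F (UNIV :: 'l set) \<cong> G1"
  shows "(\<exists>!K. (\<exists>a\<in>F. \<exists>r. r ^ 2 = a \<and> r \<notin> F \<and> K = adjoin F r) \<and>
              (\<exists>E. galois_ext F E \<and> K \<subseteq> E \<and> gal_group F E \<cong> C4)) \<and>
         (\<forall>K a r E. a \<in> F \<and> r ^ 2 = a \<and> r \<notin> F \<and> K = adjoin F r \<and>
              galois_ext F E \<and> K \<subseteq> E \<and> gal_group F E \<cong> C4
            \<longrightarrow> \<not> rigid F (- a))"
proof -
  obtain \<phi> where phi: "\<phi> \<in> iso (gal_group F UNIV) G1" using assms(3) by (auto simp: is_iso_def)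
  interpret GG F \<phi> using assms(1,2) phi by unfold_locales
  obtain r0 where r0nz: "r0 \<noteq> 0" and r0e: "\<And>g. g \<in> carrier \<Gamma> \<Longrightarrow> g r0 = chia (\<Psi> g) * r0"
    using eigen_a by blast
  obtain \<theta> where tnz: "\<theta> \<noteq> 0" and te: "\<And>g. g \<in> carrier \<Gamma> \<Longrightarrow> even (qm (\<Psi> g)) \<Longrightarrow> g \<theta> = e4 (\<Psi> g) * \<theta>"
    using eigen_4 by blast
  interpret G2: GG2 F \<phi> r0 \<theta> using r0nz r0e tnz te by unfold_locales auto
  have sub: "is_subfield F" by (rule subF)
  have eig: "\<And>g. g \<in> carrier \<Gamma> \<Longrightarrow> g r = chia (\<Psi> g) * r"
    if "a \<in> F" "r ^ 2 = a" "r \<notin> F" "adjoin F r \<subseteq> E" "galois_ext F E" "gal_group F E \<cong> C4" for a r E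
    using E_eigen[OF that] .
  have prod: "r * s \<in> F" if hr: "\<And>g. g \<in> carrier \<Gamma> \<Longrightarrow> g r = chia (\<Psi> g) * r"
      and hs: "\<And>g. g \<in> carrier \<Gamma> \<Longrightarrow> g s = chia (\<Psi> g) * s" for r s
  proof -
    have "g (r * s) = r * s" if g: "g \<in> carrier \<Gamma>" for g
    proof -
      have "chia (\<Psi> g) * chia (\<Psi> g) = (1::'l)" by (simp add: chia_def)
      then show ?thesis using hr[OF g] hs[OF g] act(2)[OF g]
        by (simp add: algebra_simps)
    qed
    then show ?thesis using fixed_iff by blast
  qed
  define K0 where "K0 = adjoin F r0"
  have P0: "(\<exists>a\<in>F. \<exists>r. r ^ 2 = a \<and> r \<notin> F \<and> K0 = adjoin F r) \<and>
        (\<exists>E. galois_ext F E \<and> K0 \<subseteq> E \<and> gal_group F E \<cong> C4)"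
  proof
    show "\<exists>a\<in>F. \<exists>r. r ^ 2 = a \<and> r \<notin> F \<and> K0 = adjoin F r"
    proof (intro bexI[of _ "r0 * r0"] exI[of _ r0] conjI)
      show "r0 ^ 2 = r0 * r0" by (simp add: power2_eq_square)
    qed (simp_all add: G2.a0F G2.r0_notF K0_def)
    show "\<exists>E. galois_ext F E \<and> K0 \<subseteq> E \<and> gal_group F E \<cong> C4"
    proof (intro exI[of _ G2.E0] conjI)
      show "K0 \<subseteq> G2.E0" unfolding K0_def by (rule G2.adjoin_E0)
    qed (simp_all add: G2.E0_galois G2.E0_C4)
  qed
  have uniq: "K = K0" if hK: "(\<exists>a\<in>F. \<exists>r. r ^ 2 = a \<and> r \<notin> F \<and> K = adjoin F r) \<and>
        (\<exists>E. galois_ext F E \<and> K \<subseteq> E \<and> gal_group F E \<cong> C4)" for K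
  proof -
    obtain a r E where a: "a \<in> F" "r ^ 2 = a" "r \<notin> F" "K = adjoin F r"
      and E: "galois_ext F E" "K \<subseteq> E" "gal_group F E \<cong> C4" using hK by blast
    have re: "\<And>g. g \<in> carrier \<Gamma> \<Longrightarrow> g r = chia (\<Psi> g) * r"
      by (rule eig[of a r E]) (use a E in auto)
    have rnz: "r \<noteq> 0" using a(3) subfieldD(1)[OF sub] by auto
    have "r * r \<in> F" using a by (simp add: power2_eq_square)
    moreover have "r * r0 \<in> F" using prod re r0e by blast
    moreover have "r0 * r \<in> F" using prod re r0e by blast
    ultimately have "adjoin F r0 \<subseteq> adjoin F r" "adjoin F r \<subseteq> adjoin F r0"
      using adjoin_sub2[OF rnz] adjoin_sub2[OF r0nz] G2.a0F by auto
    then show ?thesis using a(4) by (simp add: K0_def)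
  qed
  have part1: "\<exists>!K. (\<exists>a\<in>F. \<exists>r. r ^ 2 = a \<and> r \<notin> F \<and> K = adjoin F r) \<and>
              (\<exists>E. galois_ext F E \<and> K \<subseteq> E \<and> gal_group F E \<cong> C4)"
    by (rule ex1I[where a=K0], fact P0, rule uniq, assumption)
  have part2: "\<not> rigid F (- a)"
    if "a \<in> F \<and> r ^ 2 = a \<and> r \<notin> F \<and> K = adjoin F r \<and> galois_ext F E \<and> K \<subseteq> E \<and> gal_group F E \<cong> C4"
    for K a r E
  proof -
    have re: "\<And>g. g \<in> carrier \<Gamma> \<Longrightarrow> g r = chia (\<Psi> g) * r"
      by (rule eig[of a r E]) (use that in auto)
    have rnz: "r \<noteq> 0" using that subfieldD(1)[OF sub] by auto
    have "- a = - (r * r)" using that by (simp add: power2_eq_square)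
    then show ?thesis using not_rigid[OF rnz re] by simp
  qed
  show ?thesis
  proof (intro conjI allI impI)
    show "\<exists>!K. (\<exists>a\<in>F. \<exists>r. r ^ 2 = a \<and> r \<notin> F \<and> K = adjoin F r) \<and>
              (\<exists>E. galois_ext F E \<and> K \<subseteq> E \<and> gal_group F E \<cong> C4)" by (rule part1)
    fix K a r E
    assume "a \<in> F \<and> r ^ 2 = a \<and> r \<notin> F \<and> K = adjoin F r \<and> galois_ext F E \<and> K \<subseteq> E \<and> gal_group F E \<cong> C4"
    then show "\<not> rigid F (- a)" by (rule part2)
  qed
qed

end
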